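(* Let $\lambda\geq\mu\geq 1$, $K\geq 0$, let $\gamma\in C^\infty(\mathbb{S}^1)$ be a smooth $2\pi$-periodic function with zero mean, and let $\mathcal{Q}\in C^\infty(\overline\Omega,\mathrm{Sym}_n)$ satisfy $\|\mathcal{Q}\|_k\leq K\mu^k$ for all $k\geq 0$. Then for any fixed $j\geq 0$ and each $i=1,\dots,n$ there exist $w^j\in C^\infty(\overline\Omega,\mathbb{R}^n)$, $\mathcal{G}^j,\mathcal{R}^j\in C^\infty(\overline\Omega,\mathrm{Sym}_n)$ and $\gamma^j\in C^\infty(\mathbb{S}^1)$ with zero mean such that $$\gamma(\lambda x\cdot\xi_i)\,\mathcal{Q}=2\,\mathrm{sym}(\nabla w^j)+\gamma^j(\lambda x\cdot\xi_i)\,(\mu\lambda^{-1})^j\,\mathcal{G}^j+\mathcal{R}^j,$$ where $\mathcal{R}^j(x)\in\mathrm{span}\{\xi_l\otimes\xi_l:l=n+1,\dots,n_*\}$ for every $x$, and for all $k\geq0$ $$\|w^j\|_k\leq CK\lambda^{k-1},\qquad \|\mathcal{G}^j\|_k\leq CK\mu^k,\qquad \|\mathcal{R}^j\|_k\leq CK\lambda^k,$$ with $C$ depending only on $n$ and $\gamma$ (and on $j,k$).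
   Context: $\Omega\subset\mathbb{R}^n$ bounded domain, $n\ge2$, $n_*=n(n+1)/2$, $\mathrm{Sym}_n$ symmetric $n\times n$ matrices, $\mathrm{sym}(A)=\frac12(A+A^t)$. $\{\xi_l\}_{l=1}^{n_*}=\{(e_i+e_j)/|e_i+e_j|:1\le i\le j\le n\}$ with $\xi_l=e_l$ for $l\le n$. Norms: $\|f\|_k=\sum_{m\le k}\sum_{|\beta|=m}\sup_\Omega|\nabla^\beta f|$. *)

theory Defs
  imports "HOL-Analysis.Analysis" "HOL-Library.Multiset"
begin

definition partial :: "'n::finite \<Rightarrow> (real^'n \<Rightarrow> 'b::real_normed_vector) \<Rightarrow> real^'n \<Rightarrow> 'b" where
  "partial i f x = vector_derivative (\<lambda>t. f (x + t *\<^sub>R axis i 1)) (at 0)"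

fun dpar :: "'n::finite list \<Rightarrow> (real^'n \<Rightarrow> 'b::real_normed_vector) \<Rightarrow> real^'n \<Rightarrow> 'b" where
  "dpar [] f = f"
| "dpar (i # is) f = partial i (dpar is f)"

text \<open>Derivative nabla^beta for a multi-index beta, represented as a multiset of directions.\<close>
definition dmulti :: "'n::finite multiset \<Rightarrow> (real^'n \<Rightarrow> 'b::real_normed_vector) \<Rightarrow> real^'n \<Rightarrow> 'b" where
  "dmulti \<beta> f = dpar (SOME ds. mset ds = \<beta>) f"

definition smooth_on :: "(real^'n::finite) set \<Rightarrow> (real^'n \<Rightarrow> 'b::real_normed_vector) \<Rightarrow> bool" where
  "smooth_on \<Omega> f \<longleftrightarrow>
     (\<forall>ds. continuous_on \<Omega> (dpar ds f) \<and>
        (\<forall>i. \<forall>x\<in>\<Omega>. (\<lambda>t. dpar ds f (x + t *\<^sub>R axis i 1)) differentiable (at 0)))"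

definition smooth_closure :: "(real^'n::finite) set \<Rightarrow> (real^'n \<Rightarrow> 'b::real_normed_vector) \<Rightarrow> bool" where
  "smooth_closure \<Omega> f \<longleftrightarrow> smooth_on \<Omega> f \<and> continuous_on (closure \<Omega>) f \<and>
     (\<forall>ds. \<exists>g. continuous_on (closure \<Omega>) g \<and> (\<forall>x\<in>\<Omega>. g x = dpar ds f x))"

definition Ck_norm :: "(real^'n::finite) set \<Rightarrow> nat \<Rightarrow> (real^'n \<Rightarrow> 'b::real_normed_vector) \<Rightarrow> real" where
  "Ck_norm \<Omega> k f = (\<Sum>m\<le>k. \<Sum>\<beta>\<in>{\<beta>::'n multiset. size \<beta> = m}. (SUP x\<in>\<Omega>. norm (dmulti \<beta> f x)))"

definition is_sym :: "real^'n^'n \<Rightarrow> bool" where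
  "is_sym A \<longleftrightarrow> transpose A = A"

definition symm :: "real^'n^'n \<Rightarrow> real^'n^'n" where
  "symm A = (1/2) *\<^sub>R (A + transpose A)"

definition grad :: "(real^'n::finite \<Rightarrow> real^'n) \<Rightarrow> real^'n \<Rightarrow> real^'n^'n" where
  "grad w x = (\<chi> p q. partial q (\<lambda>y. w y $ p) x)"

definition outer :: "real^'n \<Rightarrow> real^'n \<Rightarrow> real^'n^'n" where
  "outer u v = (\<chi> p q. u $ p * v $ q)"

text \<open>The directions xi_l for l > n: (e_a + e_b)/|e_a + e_b| with a \<noteq> b.\<close>
definition xi_pair :: "'n::finite \<Rightarrow> 'n \<Rightarrow> real^'n" where
  "xi_pair a b = (1 / norm (axis a (1::real) + axis b 1)) *\<^sub>R (axis a 1 + axis b 1)"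

definition offdiag_span :: "(real^'n::finite^'n) set" where
  "offdiag_span = span {outer (xi_pair a b) (xi_pair a b) | a b. a \<noteq> b}"

definition smooth_periodic :: "(real \<Rightarrow> real) \<Rightarrow> bool" where
  "smooth_periodic g \<longleftrightarrow> (\<forall>x. g (x + 2*pi) = g x) \<and> (\<forall>k x. ((deriv ^^ k) g) differentiable (at x))"

definition zero_mean :: "(real \<Rightarrow> real) \<Rightarrow> bool" where
  "zero_mean g \<longleftrightarrow> integral {0..2*pi} g = 0"

end

theory Submission
  imports Defs
begin


lemma dpar_append: "dpar (xs @ ys) f = dpar xs (dpar ys f)"
  by (induction xs) auto

lemma dpar_snoc: "dpar (ds @ [d]) f = dpar ds (partial d f)"
  by (simp add: dpar_append)

definition ldiff :: "(real^'n::finite \<Rightarrow> 'b::real_normed_vector) \<Rightarrow> real^'n \<Rightarrow> 'n \<Rightarrow> bool" where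
  "ldiff f x i \<longleftrightarrow> (\<lambda>t. f (x + t *\<^sub>R axis i 1)) differentiable (at 0)"

lemma ldiff_partial:
  "ldiff f x i \<Longrightarrow> ((\<lambda>t. f (x + t *\<^sub>R axis i 1)) has_vector_derivative partial i f x) (at 0)"
  unfolding ldiff_def partial_def by (simp add: vector_derivative_works[symmetric])

lemma partial_eqI:
  "((\<lambda>t. f (x + t *\<^sub>R axis i 1)) has_vector_derivative D) (at 0) \<Longrightarrow> partial i f x = D"
  unfolding partial_def by (rule vector_derivative_at)

lemma ldiffI:
  "((\<lambda>t. f (x + t *\<^sub>R axis i 1)) has_vector_derivative D) (at 0) \<Longrightarrow> ldiff f x i"
  unfolding ldiff_def by (rule differentiableI_vector)

lemma norm_axis1: "norm (t *\<^sub>R axis i (1::real)) = \<bar>t\<bar>"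
  by simp

lemma line_in_open:
  fixes x :: "real^'n::finite"
  assumes "open \<Omega>" "x \<in> \<Omega>"
  obtains e where "e > 0" "\<And>t. \<bar>t\<bar> < e \<Longrightarrow> x + t *\<^sub>R axis i 1 \<in> \<Omega>"
proof -
  obtain e where e: "e > 0" "ball x e \<subseteq> \<Omega>" using assms open_contains_ball by blast
  show ?thesis
  proof (rule that[OF e(1)])
    fix t :: real assume "\<bar>t\<bar> < e"
    then have "x + t *\<^sub>R axis i 1 \<in> ball x e"
      by (simp add: dist_norm norm_axis1)
    then show "x + t *\<^sub>R axis i 1 \<in> \<Omega>" using e by blast
  qed
qed

lemma hvd_local:
  fixes x :: "real^'n::finite"
  assumes "open \<Omega>" "x \<in> \<Omega>" "\<forall>y\<in>\<Omega>. f y = g y"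
    and "((\<lambda>t. f (x + t *\<^sub>R axis i 1)) has_vector_derivative D) (at 0)"
  shows "((\<lambda>t. g (x + t *\<^sub>R axis i 1)) has_vector_derivative D) (at 0)"
proof -
  obtain e where e: "e > 0" "\<And>t. \<bar>t\<bar> < e \<Longrightarrow> x + t *\<^sub>R axis i 1 \<in> \<Omega>"
    using line_in_open[OF assms(1,2)] by blast
  show ?thesis
    apply (rule has_vector_derivative_transform_within_open[OF assms(4), of "ball 0 e"])
    using e assms(3) by (auto simp: dist_norm)
qed

lemma ldiff_local:
  fixes x :: "real^'n::finite"
  assumes "open \<Omega>" "x \<in> \<Omega>" "\<forall>y\<in>\<Omega>. f y = g y" "ldiff f x i"
  shows "ldiff g x i"
  using hvd_local[OF assms(1-3) ldiff_partial[OF assms(4)]] by (rule ldiffI)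

lemma partial_local:
  fixes x :: "real^'n::finite"
  assumes "open \<Omega>" "x \<in> \<Omega>" "\<forall>y\<in>\<Omega>. f y = g y"
  shows "partial i f x = partial i g x"
proof -
  obtain e where e: "e > 0" "\<And>t. \<bar>t\<bar> < e \<Longrightarrow> x + t *\<^sub>R axis i 1 \<in> \<Omega>"
    using line_in_open[OF assms(1,2)] by blast
  have "vector_derivative (\<lambda>t. f (x + t *\<^sub>R axis i 1)) (at 0) =
        vector_derivative (\<lambda>t. g (x + t *\<^sub>R axis i 1)) (at 0)"
    unfolding vector_derivative_def
  proof (rule arg_cong[where f=Eps], rule ext, rule iffI)
    fix D assume "((\<lambda>t. f (x + t *\<^sub>R axis i 1)) has_vector_derivative D) (at 0)"
    then show "((\<lambda>t. g (x + t *\<^sub>R axis i 1)) has_vector_derivative D) (at 0)"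
      by (rule hvd_local[OF assms])
  next
    fix D assume gD: "((\<lambda>t. g (x + t *\<^sub>R axis i 1)) has_vector_derivative D) (at 0)"
    have gf: "\<forall>y\<in>\<Omega>. g y = f y" using assms(3) by auto
    show "((\<lambda>t. f (x + t *\<^sub>R axis i 1)) has_vector_derivative D) (at 0)"
      by (rule hvd_local[OF assms(1,2) gf gD])
  qed
  then show ?thesis unfolding partial_def .
qed

lemma dpar_local:
  fixes x :: "real^'n::finite"
  assumes "open \<Omega>" "x \<in> \<Omega>" "\<forall>y\<in>\<Omega>. f y = g y"
  shows "dpar ds f x = dpar ds g x"
  using assms(2)
proof (induction ds arbitrary: x)
  case Nil then show ?case using assms(3) by simp
next
  case (Cons d ds)
  show ?case using partial_local[OF assms(1) Cons.prems, of "dpar ds f" "dpar ds g" d] Cons.IH by simp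
qed

lemma smooth_on_iff:
  "smooth_on \<Omega> f \<longleftrightarrow> (\<forall>ds. continuous_on \<Omega> (dpar ds f) \<and> (\<forall>i. \<forall>x\<in>\<Omega>. ldiff (dpar ds f) x i))"
  unfolding smooth_on_def ldiff_def by simp

lemma smooth_on_D:
  assumes "smooth_on \<Omega> f"
  shows "continuous_on \<Omega> (dpar ds f)" "x \<in> \<Omega> \<Longrightarrow> ldiff (dpar ds f) x i"
  using assms unfolding smooth_on_iff by auto

lemma smooth_on_cong:
  fixes f :: "real^'n::finite \<Rightarrow> 'b::real_normed_vector"
  assumes "open \<Omega>" "\<forall>y\<in>\<Omega>. f y = g y" "smooth_on \<Omega> f"
  shows "smooth_on \<Omega> g"
  unfolding smooth_on_iff
proof (intro allI conjI ballI)
  fix ds :: "'n list"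
  have eq: "\<forall>y\<in>\<Omega>. dpar ds f y = dpar ds g y"
    using dpar_local[OF assms(1) _ assms(2)] by blast
  show "continuous_on \<Omega> (dpar ds g)"
    using continuous_on_cong[OF refl, of \<Omega> "dpar ds f" "dpar ds g"] eq smooth_on_D(1)[OF assms(3)] by blast
  fix i x assume "x \<in> \<Omega>"
  show "ldiff (dpar ds g) x i"
    by (rule ldiff_local[OF assms(1) \<open>x\<in>\<Omega>\<close> eq smooth_on_D(2)[OF assms(3) \<open>x\<in>\<Omega>\<close>]])
qed

lemma smooth_on_partial:
  assumes "smooth_on \<Omega> f" shows "smooth_on \<Omega> (partial d f)"
  using assms unfolding smooth_on_iff dpar_snoc[symmetric] by blast

lemma smooth_on_dpar:
  assumes "smooth_on \<Omega> f" shows "smooth_on \<Omega> (dpar es f)"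
  using assms unfolding smooth_on_iff dpar_append[symmetric] by blast

lemma partial_add:
  assumes "ldiff f x i" "ldiff g x i"
  shows "partial i (\<lambda>y. f y + g y) x = partial i f x + partial i g x"
    "ldiff (\<lambda>y. f y + g y) x i"
proof -
  have "((\<lambda>t. f (x + t *\<^sub>R axis i 1) + g (x + t *\<^sub>R axis i 1)) has_vector_derivative
      partial i f x + partial i g x) (at 0)"
    by (intro has_vector_derivative_add ldiff_partial assms)
  then show "partial i (\<lambda>y. f y + g y) x = partial i f x + partial i g x"
    "ldiff (\<lambda>y. f y + g y) x i"
    by (auto intro: partial_eqI ldiffI)
qed

lemma partial_lin:
  assumes "bounded_linear L" "ldiff f x i"
  shows "partial i (\<lambda>y. L (f y)) x = L (partial i f x)"
    "ldiff (\<lambda>y. L (f y)) x i"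
proof -
  have "((\<lambda>t. L (f (x + t *\<^sub>R axis i 1))) has_vector_derivative L (partial i f x)) (at 0)"
    by (intro bounded_linear.has_vector_derivative[OF assms(1)] ldiff_partial assms)
  then show "partial i (\<lambda>y. L (f y)) x = L (partial i f x)" "ldiff (\<lambda>y. L (f y)) x i"
    by (auto intro: partial_eqI ldiffI)
qed

lemma partial_const: "partial i (\<lambda>y. c) x = 0" "ldiff (\<lambda>y. c) x i"
proof -
  have "((\<lambda>t. c) has_vector_derivative 0) (at 0)" by simp
  then show "partial i (\<lambda>y. c) x = 0" "ldiff (\<lambda>y. c) x i"
    by (rule partial_eqI, rule ldiffI)
qed

lemma dpar_const: "dpar ds (\<lambda>y. c) x = (if ds = [] then c else 0)"
proof (induction ds arbitrary: x)
  case Nil then show ?case by simp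
next
  case (Cons d ds)
  have "dpar ds (\<lambda>y. c) = (\<lambda>y. if ds = [] then c else 0)" using Cons.IH by auto
  then show ?case by (simp add: partial_const)
qed

lemma smooth_on_const: "smooth_on (\<Omega>::(real^'n::finite) set) (\<lambda>y. c)"
  unfolding smooth_on_iff
proof (intro allI conjI ballI)
  fix ds :: "'n list"
  have e: "dpar ds (\<lambda>y. c) = (\<lambda>y. if ds = [] then c else 0)" by (rule ext) (rule dpar_const)
  show "continuous_on \<Omega> (dpar ds (\<lambda>y. c))" unfolding e by simp
  fix i x show "ldiff (dpar ds (\<lambda>y. c)) x i" unfolding e using partial_const(2) by (cases "ds = []") auto
qed

lemma dpar_add:
  assumes "open \<Omega>" "smooth_on \<Omega> f" "smooth_on \<Omega> g" "x \<in> \<Omega>"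
  shows "dpar ds (\<lambda>y. f y + g y) x = dpar ds f x + dpar ds g x"
  using assms(4)
proof (induction ds arbitrary: x)
  case Nil then show ?case by simp
next
  case (Cons d ds)
  have "dpar (d # ds) (\<lambda>y. f y + g y) x = partial d (\<lambda>y. dpar ds f y + dpar ds g y) x"
    using partial_local[OF assms(1) Cons.prems, of "dpar ds (\<lambda>y. f y + g y)" "\<lambda>y. dpar ds f y + dpar ds g y" d]
      Cons.IH by simp
  also have "\<dots> = dpar (d # ds) f x + dpar (d # ds) g x"
    using partial_add(1)[OF smooth_on_D(2)[OF assms(2) Cons.prems] smooth_on_D(2)[OF assms(3) Cons.prems]]
    by simp
  finally show ?case .
qed

lemma smooth_on_add:
  fixes f :: "real^'n::finite \<Rightarrow> 'b::real_normed_vector"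
  assumes "open \<Omega>" "smooth_on \<Omega> f" "smooth_on \<Omega> g"
  shows "smooth_on \<Omega> (\<lambda>y. f y + g y)"
  unfolding smooth_on_iff
proof (intro allI conjI ballI)
  fix ds :: "'n list"
  have eq: "\<forall>y\<in>\<Omega>. dpar ds f y + dpar ds g y = dpar ds (\<lambda>y. f y + g y) y"
    using dpar_add[OF assms] by simp
  have "continuous_on \<Omega> (\<lambda>y. dpar ds f y + dpar ds g y)"
    by (intro continuous_on_add smooth_on_D assms)
  then show "continuous_on \<Omega> (dpar ds (\<lambda>y. f y + g y))"
    using continuous_on_cong[OF refl, of \<Omega> "\<lambda>y. dpar ds f y + dpar ds g y" "dpar ds (\<lambda>y. f y + g y)"] eq by blast
  fix i x assume x: "x \<in> \<Omega>"
  have l1: "ldiff (dpar ds f) x i" by (rule smooth_on_D(2)[OF assms(2) x])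
  have l2: "ldiff (dpar ds g) x i" by (rule smooth_on_D(2)[OF assms(3) x])
  show "ldiff (dpar ds (\<lambda>y. f y + g y)) x i"
    by (rule ldiff_local[OF assms(1) x eq partial_add(2)[OF l1 l2]])
qed

lemma dpar_lin:
  assumes "open \<Omega>" "bounded_linear L" "smooth_on \<Omega> f" "x \<in> \<Omega>"
  shows "dpar ds (\<lambda>y. L (f y)) x = L (dpar ds f x)"
  using assms(4)
proof (induction ds arbitrary: x)
  case Nil then show ?case by simp
next
  case (Cons d ds)
  have "dpar (d # ds) (\<lambda>y. L (f y)) x = partial d (\<lambda>y. L (dpar ds f y)) x"
    using partial_local[OF assms(1) Cons.prems, of "dpar ds (\<lambda>y. L (f y))" "\<lambda>y. L (dpar ds f y)" d]
      Cons.IH by simp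
  also have "\<dots> = L (dpar (d # ds) f x)"
    using partial_lin(1)[OF assms(2) smooth_on_D(2)[OF assms(3) Cons.prems]] by simp
  finally show ?case .
qed

lemma smooth_on_lin:
  fixes f :: "real^'n::finite \<Rightarrow> 'b::real_normed_vector"
  assumes "open \<Omega>" "bounded_linear L" "smooth_on \<Omega> f"
  shows "smooth_on \<Omega> (\<lambda>y. L (f y))"
  unfolding smooth_on_iff
proof (intro allI conjI ballI)
  fix ds :: "'n list"
  have eq: "\<forall>y\<in>\<Omega>. L (dpar ds f y) = dpar ds (\<lambda>y. L (f y)) y"
    using dpar_lin[OF assms] by simp
  have "continuous_on \<Omega> (\<lambda>y. L (dpar ds f y))"
    by (intro continuous_on_compose2[OF linear_continuous_on[OF assms(2)] smooth_on_D(1)[OF assms(3)]]) auto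
  then show "continuous_on \<Omega> (dpar ds (\<lambda>y. L (f y)))"
    using continuous_on_cong[OF refl, of \<Omega> "\<lambda>y. L (dpar ds f y)" "dpar ds (\<lambda>y. L (f y))"] eq by blast
  fix i x assume x: "x \<in> \<Omega>"
  have l1: "ldiff (dpar ds f) x i" by (rule smooth_on_D(2)[OF assms(3) x])
  show "ldiff (dpar ds (\<lambda>y. L (f y))) x i"
    by (rule ldiff_local[OF assms(1) x eq partial_lin(2)[OF assms(2) l1]])
qed



lemma smooth_on_ldiff0: "smooth_on \<Omega> f \<Longrightarrow> x \<in> \<Omega> \<Longrightarrow> ldiff f x i"
  using smooth_on_D(2)[where ds="[]"] by fastforce

lemma smooth_on_cont0: "smooth_on \<Omega> f \<Longrightarrow> continuous_on \<Omega> f"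
  using smooth_on_D(1)[where ds="[]"] by fastforce

definition ext_ok :: "(real^'n::finite) set \<Rightarrow> (real^'n \<Rightarrow> 'b::real_normed_vector) \<Rightarrow> bool" where
  "ext_ok \<Omega> h \<longleftrightarrow> (\<exists>g. continuous_on (closure \<Omega>) g \<and> (\<forall>x\<in>\<Omega>. g x = h x))"

definition SC :: "(real^'n::finite) set \<Rightarrow> (real^'n \<Rightarrow> 'b::real_normed_vector) \<Rightarrow> bool" where
  "SC \<Omega> f \<longleftrightarrow> smooth_on \<Omega> f \<and> (\<forall>ds. ext_ok \<Omega> (dpar ds f))"

lemma ext_ok_cong: "(\<forall>x\<in>\<Omega>. h x = h' x) \<Longrightarrow> ext_ok \<Omega> h \<Longrightarrow> ext_ok \<Omega> h'"
  unfolding ext_ok_def by auto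

lemma ext_ok_cont: "continuous_on (closure \<Omega>) h \<Longrightarrow> ext_ok \<Omega> h"
  unfolding ext_ok_def by auto

lemma ext_ok_add: "ext_ok \<Omega> f \<Longrightarrow> ext_ok \<Omega> g \<Longrightarrow> ext_ok \<Omega> (\<lambda>x. f x + g x)"
  unfolding ext_ok_def
proof (elim exE conjE)
  fix F G assume "continuous_on (closure \<Omega>) F" "\<forall>x\<in>\<Omega>. F x = f x"
    "continuous_on (closure \<Omega>) G" "\<forall>x\<in>\<Omega>. G x = g x"
  then show "\<exists>H. continuous_on (closure \<Omega>) H \<and> (\<forall>x\<in>\<Omega>. H x = f x + g x)"
    by (intro exI[of _ "\<lambda>x. F x + G x"]) (auto intro: continuous_on_add)
qed

lemma ext_ok_scaleR: "ext_ok \<Omega> f \<Longrightarrow> ext_ok \<Omega> g \<Longrightarrow> ext_ok \<Omega> (\<lambda>x. f x *\<^sub>R g x)"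
  unfolding ext_ok_def
proof (elim exE conjE)
  fix F G assume "continuous_on (closure \<Omega>) F" "\<forall>x\<in>\<Omega>. F x = f x"
    "continuous_on (closure \<Omega>) G" "\<forall>x\<in>\<Omega>. G x = g x"
  then show "\<exists>H. continuous_on (closure \<Omega>) H \<and> (\<forall>x\<in>\<Omega>. H x = f x *\<^sub>R g x)"
    by (intro exI[of _ "\<lambda>x. F x *\<^sub>R G x"]) (auto intro: continuous_on_scaleR)
qed

lemma ext_ok_lin: "bounded_linear L \<Longrightarrow> ext_ok \<Omega> f \<Longrightarrow> ext_ok \<Omega> (\<lambda>x. L (f x))"
  unfolding ext_ok_def
proof (elim exE conjE)
  fix F assume L: "bounded_linear L" and "continuous_on (closure \<Omega>) F" "\<forall>x\<in>\<Omega>. F x = f x"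
  then show "\<exists>H. continuous_on (closure \<Omega>) H \<and> (\<forall>x\<in>\<Omega>. H x = L (f x))"
    by (intro exI[of _ "\<lambda>x. L (F x)"])
      (auto intro: continuous_on_compose2[OF linear_continuous_on[OF L]])
qed

lemma SC_cong:
  fixes f :: "real^'n::finite \<Rightarrow> 'b::real_normed_vector"
  assumes "open \<Omega>" "\<forall>y\<in>\<Omega>. f y = g y" "SC \<Omega> f"
  shows "SC \<Omega> g"
  unfolding SC_def
proof (intro conjI allI)
  show "smooth_on \<Omega> g" using smooth_on_cong[OF assms(1,2)] assms(3) unfolding SC_def by blast
  fix ds :: "'n list"
  have e: "\<forall>x\<in>\<Omega>. dpar ds f x = dpar ds g x" using dpar_local[OF assms(1) _ assms(2)] by blast
  have "ext_ok \<Omega> (dpar ds f)" using assms(3) unfolding SC_def by blast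
  then show "ext_ok \<Omega> (dpar ds g)" by (rule ext_ok_cong[OF e])
qed

lemma SC_add:
  fixes f :: "real^'n::finite \<Rightarrow> 'b::real_normed_vector"
  assumes "open \<Omega>" "SC \<Omega> f" "SC \<Omega> g"
  shows "SC \<Omega> (\<lambda>y. f y + g y)"
  unfolding SC_def
proof (intro conjI allI)
  show "smooth_on \<Omega> (\<lambda>y. f y + g y)" using assms(2,3) smooth_on_add[OF assms(1)] unfolding SC_def by blast
  fix ds :: "'n list"
  have "ext_ok \<Omega> (\<lambda>y. dpar ds f y + dpar ds g y)"
    using assms(2,3) unfolding SC_def by (intro ext_ok_add[of \<Omega> "dpar ds f" "dpar ds g"]) auto
  moreover have "\<forall>x\<in>\<Omega>. dpar ds f x + dpar ds g x = dpar ds (\<lambda>y. f y + g y) x"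
  proof -
    have sf: "smooth_on \<Omega> f" "smooth_on \<Omega> g" using assms(2,3) unfolding SC_def by auto
    show ?thesis using dpar_add[OF assms(1) sf] by simp
  qed
  ultimately show "ext_ok \<Omega> (dpar ds (\<lambda>y. f y + g y))"
    by (rule ext_ok_cong[rotated])
qed

lemma SC_lin:
  fixes f :: "real^'n::finite \<Rightarrow> 'b::real_normed_vector"
  assumes "open \<Omega>" "bounded_linear L" "SC \<Omega> f"
  shows "SC \<Omega> (\<lambda>y. L (f y))"
  unfolding SC_def
proof (intro conjI allI)
  show "smooth_on \<Omega> (\<lambda>y. L (f y))" using assms(3) smooth_on_lin[OF assms(1,2)] unfolding SC_def by blast
  fix ds :: "'n list"
  have "ext_ok \<Omega> (\<lambda>y. L (dpar ds f y))"
    using assms(2,3) unfolding SC_def by (intro ext_ok_lin[of L \<Omega> "dpar ds f"]) auto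
  moreover have "\<forall>x\<in>\<Omega>. L (dpar ds f x) = dpar ds (\<lambda>y. L (f y)) x"
  proof -
    have sf: "smooth_on \<Omega> f" using assms(3) unfolding SC_def by auto
    show ?thesis using dpar_lin[OF assms(1,2) sf] by simp
  qed
  ultimately show "ext_ok \<Omega> (dpar ds (\<lambda>y. L (f y)))"
    by (rule ext_ok_cong[rotated])
qed

lemma SC_const: "SC (\<Omega>::(real^'n::finite) set) (\<lambda>y. c)"
  unfolding SC_def
proof (intro conjI allI)
  show "smooth_on \<Omega> (\<lambda>y. c)" by (rule smooth_on_const)
  fix ds :: "'n list"
  have e: "dpar ds (\<lambda>y. c) = (\<lambda>y. if ds = [] then c else 0)" by (rule ext) (rule dpar_const)
  show "ext_ok \<Omega> (dpar ds (\<lambda>y. c))" unfolding e by (rule ext_ok_cont) simp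
qed

lemma SC_partial: "SC \<Omega> f \<Longrightarrow> SC \<Omega> (partial d f)"
  unfolding SC_def using smooth_on_partial by (metis dpar_snoc)

lemma SC_dpar: "SC \<Omega> f \<Longrightarrow> SC \<Omega> (dpar es f)"
  unfolding SC_def using smooth_on_dpar by (metis dpar_append)

lemma SC_sum:
  fixes F :: "'i \<Rightarrow> real^'n::finite \<Rightarrow> 'b::real_normed_vector"
  assumes "open \<Omega>" "finite I" "\<forall>k\<in>I. SC \<Omega> (F k)"
  shows "SC \<Omega> (\<lambda>y. \<Sum>k\<in>I. F k y)"
  using assms(2,3)
proof (induction I rule: finite_induct)
  case empty then show ?case using SC_const[of \<Omega> 0] by simp
next
  case (insert a I)
  then show ?case using SC_add[OF assms(1), of "F a" "\<lambda>y. \<Sum>k\<in>I. F k y"] by simp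
qed

lemma dpar_sum:
  fixes F :: "'i \<Rightarrow> real^'n::finite \<Rightarrow> 'b::real_normed_vector"
  assumes "open \<Omega>" "finite I" "\<forall>k\<in>I. smooth_on \<Omega> (F k)" "x \<in> \<Omega>"
  shows "dpar ds (\<lambda>y. \<Sum>k\<in>I. F k y) x = (\<Sum>k\<in>I. dpar ds (F k) x)"
  using assms(2,3)
proof (induction I rule: finite_induct)
  case empty then show ?case using dpar_const[of ds 0 x] by simp
next
  case (insert a I)
  have sm: "smooth_on \<Omega> (\<lambda>y. \<Sum>k\<in>I. F k y)"
    using insert SC_sum
  proof -
    have "\<And>J. finite J \<Longrightarrow> \<forall>k\<in>J. smooth_on \<Omega> (F k) \<Longrightarrow> smooth_on \<Omega> (\<lambda>y. \<Sum>k\<in>J. F k y)"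
    proof -
      fix J :: "'i set" assume "finite J" "\<forall>k\<in>J. smooth_on \<Omega> (F k)"
      then show "smooth_on \<Omega> (\<lambda>y. \<Sum>k\<in>J. F k y)"
      proof (induction J rule: finite_induct)
        case empty then show ?case using smooth_on_const[of \<Omega> 0] by simp
      next
        case (insert b J) then show ?case
          using smooth_on_add[OF assms(1), of "F b" "\<lambda>y. \<Sum>k\<in>J. F k y"] by simp
      qed
    qed
    then show ?thesis using insert by auto
  qed
  have "dpar ds (\<lambda>y. \<Sum>k\<in>insert a I. F k y) x = dpar ds (\<lambda>y. F a y + (\<Sum>k\<in>I. F k y)) x"
    using insert by simp
  also have "\<dots> = dpar ds (F a) x + dpar ds (\<lambda>y. \<Sum>k\<in>I. F k y) x"
    by (rule dpar_add[OF assms(1) _ sm assms(4)]) (use insert in auto)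
  finally show ?case using insert by simp
qed

lemma partial_scaleR:
  fixes g :: "real^'n::finite \<Rightarrow> 'b::real_normed_vector" and \<phi> :: "real^'n \<Rightarrow> real"
  assumes "ldiff \<phi> x i" "ldiff g x i"
  shows "partial i (\<lambda>y. \<phi> y *\<^sub>R g y) x = partial i \<phi> x *\<^sub>R g x + \<phi> x *\<^sub>R partial i g x"
    "ldiff (\<lambda>y. \<phi> y *\<^sub>R g y) x i"
proof -
  have p: "((\<lambda>t. \<phi> (x + t *\<^sub>R axis i 1)) has_field_derivative partial i \<phi> x) (at 0)"
    using ldiff_partial[OF assms(1)] by (simp add: has_real_derivative_iff_has_vector_derivative)
  have "((\<lambda>t. \<phi> (x + t *\<^sub>R axis i 1) *\<^sub>R g (x + t *\<^sub>R axis i 1)) has_vector_derivative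
      \<phi> x *\<^sub>R partial i g x + partial i \<phi> x *\<^sub>R g x) (at 0)"
    using has_vector_derivative_scaleR[OF p ldiff_partial[OF assms(2)]] by simp
  then show "partial i (\<lambda>y. \<phi> y *\<^sub>R g y) x = partial i \<phi> x *\<^sub>R g x + \<phi> x *\<^sub>R partial i g x"
    "ldiff (\<lambda>y. \<phi> y *\<^sub>R g y) x i"
    by (auto intro: partial_eqI ldiffI simp: add.commute)
qed

lemma dpar_add':
  fixes f :: "real^'n::finite \<Rightarrow> 'b::real_normed_vector"
  assumes "open \<Omega>" "x \<in> \<Omega>"
    and "\<forall>es i. length es < length ds \<longrightarrow> (\<forall>y\<in>\<Omega>. ldiff (dpar es f) y i \<and> ldiff (dpar es g) y i)"
  shows "dpar ds (\<lambda>y. f y + g y) x = dpar ds f x + dpar ds g x"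
  using assms(2,3)
proof (induction ds arbitrary: x)
  case Nil then show ?case by simp
next
  case (Cons d ds)
  have IH: "\<forall>y\<in>\<Omega>. dpar ds (\<lambda>y. f y + g y) y = dpar ds f y + dpar ds g y"
    using Cons by auto
  have "dpar (d # ds) (\<lambda>y. f y + g y) x = partial d (\<lambda>y. dpar ds f y + dpar ds g y) x"
    using partial_local[OF assms(1) Cons.prems(1) IH] by simp
  also have "\<dots> = dpar (d # ds) f x + dpar (d # ds) g x"
    using partial_add(1)[of "dpar ds f" x d "dpar ds g"] Cons.prems by auto
  finally show ?case .
qed

lemma smooth_on_scaleR_aux:
  fixes g :: "real^'n::finite \<Rightarrow> 'b::real_normed_vector" and \<phi> :: "real^'n \<Rightarrow> real"
  assumes "open \<Omega>"
  shows "\<forall>ds (\<phi> :: real^'n \<Rightarrow> real) g. length ds \<le> n \<longrightarrow> smooth_on \<Omega> \<phi> \<longrightarrow> smooth_on \<Omega> (g :: real^'n \<Rightarrow> 'b) \<longrightarrow>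
     continuous_on \<Omega> (dpar ds (\<lambda>y. \<phi> y *\<^sub>R g y)) \<and> (\<forall>i. \<forall>x\<in>\<Omega>. ldiff (dpar ds (\<lambda>y. \<phi> y *\<^sub>R g y)) x i)"
proof (induction n)
  case 0
  show ?case
  proof (intro allI impI conjI)
    fix ds :: "'n list" and \<phi> :: "real^'n \<Rightarrow> real" and g :: "real^'n \<Rightarrow> 'b"
    assume "length ds \<le> 0" "smooth_on \<Omega> \<phi>" "smooth_on \<Omega> g"
    then have ds: "ds = []" and c: "continuous_on \<Omega> \<phi>" "continuous_on \<Omega> g"
      and l: "\<And>x i. x \<in> \<Omega> \<Longrightarrow> ldiff \<phi> x i" "\<And>x i. x \<in> \<Omega> \<Longrightarrow> ldiff g x i"
      using smooth_on_ldiff0 smooth_on_cont0 by auto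
    show "continuous_on \<Omega> (dpar ds (\<lambda>y. \<phi> y *\<^sub>R g y))"
      using ds c by (simp add: continuous_on_scaleR)
    fix i show "\<forall>x\<in>\<Omega>. ldiff (dpar ds (\<lambda>y. \<phi> y *\<^sub>R g y)) x i"
    proof (intro ballI)
      fix x assume x: "x \<in> \<Omega>"
      show "ldiff (dpar ds (\<lambda>y. \<phi> y *\<^sub>R g y)) x i"
        using ds partial_scaleR(2)[OF l(1)[OF x] l(2)[OF x]] by simp
    qed
  qed
next
  case (Suc n)
  show ?case
  proof (intro allI impI)
    fix ds :: "'n list" and \<phi> :: "real^'n \<Rightarrow> real" and g :: "real^'n \<Rightarrow> 'b"
    assume len: "length ds \<le> Suc n" and s\<phi>: "smooth_on \<Omega> \<phi>" and sg: "smooth_on \<Omega> g"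
    show "continuous_on \<Omega> (dpar ds (\<lambda>y. \<phi> y *\<^sub>R g y)) \<and> (\<forall>i. \<forall>x\<in>\<Omega>. ldiff (dpar ds (\<lambda>y. \<phi> y *\<^sub>R g y)) x i)"
    proof (cases ds rule: rev_cases)
      case Nil then show ?thesis using Suc.IH s\<phi> sg by (metis le0 list.size(3))
    next
      case (snoc es d)
      have les: "length es \<le> n" using len snoc by simp
      let ?A = "\<lambda>y. partial d \<phi> y *\<^sub>R g y" and ?B = "\<lambda>y. \<phi> y *\<^sub>R partial d g y"
      have sA: "smooth_on \<Omega> (partial d \<phi>)" "smooth_on \<Omega> (partial d g)"
        using s\<phi> sg smooth_on_partial by auto
      have eq1: "\<forall>y\<in>\<Omega>. partial d (\<lambda>y. \<phi> y *\<^sub>R g y) y = ?A y + ?B y"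
      proof
        fix y assume y: "y \<in> \<Omega>"
        show "partial d (\<lambda>y. \<phi> y *\<^sub>R g y) y = ?A y + ?B y"
          by (rule partial_scaleR(1)[OF smooth_on_ldiff0[OF s\<phi> y] smooth_on_ldiff0[OF sg y]])
      qed
      have IHA: "\<forall>fs. length fs \<le> n \<longrightarrow> continuous_on \<Omega> (dpar fs ?A) \<and> (\<forall>i. \<forall>x\<in>\<Omega>. ldiff (dpar fs ?A) x i)"
        using Suc.IH sA(1) sg by blast
      have IHB: "\<forall>fs. length fs \<le> n \<longrightarrow> continuous_on \<Omega> (dpar fs ?B) \<and> (\<forall>i. \<forall>x\<in>\<Omega>. ldiff (dpar fs ?B) x i)"
        using Suc.IH sA(2) s\<phi> by blast
      have eq: "\<forall>y\<in>\<Omega>. dpar es ?A y + dpar es ?B y = dpar ds (\<lambda>y. \<phi> y *\<^sub>R g y) y"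
      proof
        fix y assume y: "y \<in> \<Omega>"
        have "dpar ds (\<lambda>y. \<phi> y *\<^sub>R g y) y = dpar es (partial d (\<lambda>y. \<phi> y *\<^sub>R g y)) y"
          using snoc by (simp add: dpar_snoc)
        also have "\<dots> = dpar es (\<lambda>y. ?A y + ?B y) y"
          by (rule dpar_local[OF assms y eq1])
        also have "\<dots> = dpar es ?A y + dpar es ?B y"
          by (rule dpar_add'[OF assms y]) (use IHA IHB les in auto)
        finally show "dpar es ?A y + dpar es ?B y = dpar ds (\<lambda>y. \<phi> y *\<^sub>R g y) y" by simp
      qed
      have c: "continuous_on \<Omega> (\<lambda>y. dpar es ?A y + dpar es ?B y)"
        using IHA IHB les by (intro continuous_on_add) auto
      show ?thesis
      proof
        show "continuous_on \<Omega> (dpar ds (\<lambda>y. \<phi> y *\<^sub>R g y))"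
          using continuous_on_cong[OF refl, of \<Omega> "\<lambda>y. dpar es ?A y + dpar es ?B y" "dpar ds (\<lambda>y. \<phi> y *\<^sub>R g y)"] eq c
          by blast
        show "\<forall>i. \<forall>x\<in>\<Omega>. ldiff (dpar ds (\<lambda>y. \<phi> y *\<^sub>R g y)) x i"
        proof (intro allI ballI)
          fix i x assume x: "x \<in> \<Omega>"
          have "ldiff (\<lambda>y. dpar es ?A y + dpar es ?B y) x i"
            using IHA IHB les x by (intro partial_add(2)) auto
          then show "ldiff (dpar ds (\<lambda>y. \<phi> y *\<^sub>R g y)) x i"
            by (rule ldiff_local[OF assms x eq])
        qed
      qed
    qed
  qed
qed

lemma smooth_on_scaleR:
  fixes g :: "real^'n::finite \<Rightarrow> 'b::real_normed_vector" and \<phi> :: "real^'n \<Rightarrow> real"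
  assumes "open \<Omega>" "smooth_on \<Omega> \<phi>" "smooth_on \<Omega> g"
  shows "smooth_on \<Omega> (\<lambda>y. \<phi> y *\<^sub>R g y)"
  unfolding smooth_on_iff using smooth_on_scaleR_aux[OF assms(1)] assms(2,3) by blast

lemma dpar_scaleR_snoc:
  fixes g :: "real^'n::finite \<Rightarrow> 'b::real_normed_vector" and \<phi> :: "real^'n \<Rightarrow> real"
  assumes "open \<Omega>" "smooth_on \<Omega> \<phi>" "smooth_on \<Omega> g" "x \<in> \<Omega>"
  shows "dpar (es @ [d]) (\<lambda>y. \<phi> y *\<^sub>R g y) x =
     dpar es (\<lambda>y. partial d \<phi> y *\<^sub>R g y) x + dpar es (\<lambda>y. \<phi> y *\<^sub>R partial d g y) x"
proof -
  have eq1: "\<forall>y\<in>\<Omega>. partial d (\<lambda>y. \<phi> y *\<^sub>R g y) y = partial d \<phi> y *\<^sub>R g y + \<phi> y *\<^sub>R partial d g y"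
  proof
    fix y assume y: "y \<in> \<Omega>"
    show "partial d (\<lambda>y. \<phi> y *\<^sub>R g y) y = partial d \<phi> y *\<^sub>R g y + \<phi> y *\<^sub>R partial d g y"
      by (rule partial_scaleR(1)[OF smooth_on_ldiff0[OF assms(2) y] smooth_on_ldiff0[OF assms(3) y]])
  qed
  have "dpar (es @ [d]) (\<lambda>y. \<phi> y *\<^sub>R g y) x = dpar es (partial d (\<lambda>y. \<phi> y *\<^sub>R g y)) x"
    by (simp add: dpar_snoc)
  also have "\<dots> = dpar es (\<lambda>y. partial d \<phi> y *\<^sub>R g y + \<phi> y *\<^sub>R partial d g y) x"
    by (rule dpar_local[OF assms(1,4) eq1])
  also have "\<dots> = dpar es (\<lambda>y. partial d \<phi> y *\<^sub>R g y) x + dpar es (\<lambda>y. \<phi> y *\<^sub>R partial d g y) x"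
    by (rule dpar_add[OF assms(1) smooth_on_scaleR[OF assms(1) smooth_on_partial[OF assms(2)] assms(3)]
         smooth_on_scaleR[OF assms(1) assms(2) smooth_on_partial[OF assms(3)]] assms(4)])
  finally show ?thesis .
qed

lemma SC_scaleR:
  fixes g :: "real^'n::finite \<Rightarrow> 'b::real_normed_vector" and \<phi> :: "real^'n \<Rightarrow> real"
  assumes "open \<Omega>" "SC \<Omega> \<phi>" "SC \<Omega> g"
  shows "SC \<Omega> (\<lambda>y. \<phi> y *\<^sub>R g y)"
proof -
  have aux: "\<forall>(\<phi> :: real^'n \<Rightarrow> real) (g :: real^'n \<Rightarrow> 'b). SC \<Omega> \<phi> \<longrightarrow> SC \<Omega> g \<longrightarrow> ext_ok \<Omega> (dpar ds (\<lambda>y. \<phi> y *\<^sub>R g y))" for ds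
  proof (induction ds rule: rev_induct)
    case Nil
    show ?case
    proof (intro allI impI)
      fix \<phi> :: "real^'n \<Rightarrow> real" and g :: "real^'n \<Rightarrow> 'b" assume "SC \<Omega> \<phi>" "SC \<Omega> g"
      then have "ext_ok \<Omega> (dpar [] \<phi>)" "ext_ok \<Omega> (dpar [] g)" unfolding SC_def by blast+
      then show "ext_ok \<Omega> (dpar [] (\<lambda>y. \<phi> y *\<^sub>R g y))" using ext_ok_scaleR by fastforce
    qed
  next
    case (snoc d es)
    show ?case
    proof (intro allI impI)
      fix \<phi> :: "real^'n \<Rightarrow> real" and g :: "real^'n \<Rightarrow> 'b" assume a: "SC \<Omega> \<phi>" "SC \<Omega> g"
      have "ext_ok \<Omega> (dpar es (\<lambda>y. partial d \<phi> y *\<^sub>R g y))"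
        using snoc a SC_partial by blast
      moreover have "ext_ok \<Omega> (dpar es (\<lambda>y. \<phi> y *\<^sub>R partial d g y))"
        using snoc a SC_partial by blast
      ultimately have "ext_ok \<Omega> (\<lambda>x. dpar es (\<lambda>y. partial d \<phi> y *\<^sub>R g y) x + dpar es (\<lambda>y. \<phi> y *\<^sub>R partial d g y) x)"
        by (rule ext_ok_add)
      moreover have "\<forall>x\<in>\<Omega>. dpar es (\<lambda>y. partial d \<phi> y *\<^sub>R g y) x + dpar es (\<lambda>y. \<phi> y *\<^sub>R partial d g y) x
          = dpar (es @ [d]) (\<lambda>y. \<phi> y *\<^sub>R g y) x"
      proof -
        have sf: "smooth_on \<Omega> \<phi>" "smooth_on \<Omega> g" using a unfolding SC_def by auto
        show ?thesis using dpar_scaleR_snoc[OF assms(1) sf] by simp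
      qed
      ultimately show "ext_ok \<Omega> (dpar (es @ [d]) (\<lambda>y. \<phi> y *\<^sub>R g y))"
        by (rule ext_ok_cong[rotated])
    qed
  qed
  moreover have "smooth_on \<Omega> (\<lambda>y. \<phi> y *\<^sub>R g y)"
    using smooth_on_scaleR[OF assms(1)] assms(2,3) unfolding SC_def by blast
  then show ?thesis
    unfolding SC_def using aux assms(2,3) by blast
qed



section \<open>Oscillating factor\<close>

lemma inner_line_axis:
  "(x + t *\<^sub>R axis d (1::real)) \<bullet> axis i 1 = x \<bullet> axis i 1 + (if d = i then t else 0)"
  by (simp add: inner_add_left inner_axis_axis)

lemma DERIV_funpow:
  assumes "\<forall>k t. (deriv ^^ k) h differentiable (at t)"
  shows "((deriv ^^ m) h has_real_derivative (deriv ^^ Suc m) h u) (at u)"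
proof -
  have "((deriv ^^ m) h has_real_derivative deriv ((deriv ^^ m) h) u) (at u)"
    using assms DERIV_deriv_iff_real_differentiable by blast
  then show ?thesis by simp
qed

lemma osc_line:
  fixes x :: "real^'n::finite"
  assumes "\<forall>k t. (deriv ^^ k) h differentiable (at t)"
  shows "((\<lambda>t. c * (deriv ^^ m) h (lam * ((x + t *\<^sub>R axis d 1) \<bullet> axis i 1))) has_vector_derivative
     (if d = i then c * lam * (deriv ^^ Suc m) h (lam * (x \<bullet> axis i 1)) else 0)) (at 0)"
proof (cases "d = i")
  case True
  let ?a = "lam * (x \<bullet> axis i 1)"
  have e: "(\<lambda>t. c * (deriv ^^ m) h (lam * ((x + t *\<^sub>R axis d 1) \<bullet> axis i 1))) =
      (\<lambda>t. c * (deriv ^^ m) h (?a + lam * t))"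
    using True by (simp add: inner_line_axis algebra_simps)
  have d1: "((\<lambda>t. ?a + lam * t) has_real_derivative lam) (at 0)"
    by (auto intro!: derivative_eq_intros)
  have d2: "((deriv ^^ m) h has_real_derivative (deriv ^^ Suc m) h (?a + lam * 0)) (at (?a + lam * 0))"
    by (rule DERIV_funpow[OF assms])
  have "((\<lambda>t. (deriv ^^ m) h (?a + lam * t)) has_real_derivative (deriv ^^ Suc m) h ?a * lam) (at 0)"
    using DERIV_chain2[OF d2 d1] by simp
  then have "((\<lambda>t. c * (deriv ^^ m) h (?a + lam * t)) has_real_derivative c * ((deriv ^^ Suc m) h ?a * lam)) (at 0)"
    by (rule DERIV_cmult)
  then show ?thesis using True unfolding e
    by (simp add: has_real_derivative_iff_has_vector_derivative[symmetric] algebra_simps)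
next
  case False
  then have e: "(\<lambda>t. c * (deriv ^^ m) h (lam * ((x + t *\<^sub>R axis d 1) \<bullet> axis i 1))) =
      (\<lambda>t. c * (deriv ^^ m) h (lam * (x \<bullet> axis i 1)))"
    by (simp add: inner_line_axis)
  show ?thesis using False unfolding e by simp
qed

lemma dpar_osc:
  fixes x :: "real^'n::finite"
  assumes "\<forall>k t. (deriv ^^ k) h differentiable (at t)"
  shows "dpar ds (\<lambda>y. h (lam * (y \<bullet> axis i 1))) x =
    (if set ds \<subseteq> {i} then lam ^ length ds * (deriv ^^ length ds) h (lam * (x \<bullet> axis i 1)) else 0)"
proof (induction ds arbitrary: x)
  case Nil then show ?case by simp
next
  case (Cons d ds)
  have e: "dpar ds (\<lambda>y. h (lam * (y \<bullet> axis i 1))) =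
    (\<lambda>y. if set ds \<subseteq> {i} then lam ^ length ds * (deriv ^^ length ds) h (lam * (y \<bullet> axis i 1)) else 0)"
    using Cons.IH by auto
  show ?case
  proof (cases "set ds \<subseteq> {i}")
    case True
    have "partial d (\<lambda>y. lam ^ length ds * (deriv ^^ length ds) h (lam * (y \<bullet> axis i 1))) x =
       (if d = i then lam ^ length ds * lam * (deriv ^^ Suc (length ds)) h (lam * (x \<bullet> axis i 1)) else 0)"
      by (rule partial_eqI) (rule osc_line[OF assms])
    moreover have "dpar (d # ds) (\<lambda>y. h (lam * (y \<bullet> axis i 1))) x =
       partial d (\<lambda>y. lam ^ length ds * (deriv ^^ length ds) h (lam * (y \<bullet> axis i 1))) x"
      using True by (simp only: dpar.simps e if_True)
    ultimately show ?thesis using True by (simp add: algebra_simps)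
  next
    case False
    then have "dpar (d # ds) (\<lambda>y. h (lam * (y \<bullet> axis i 1))) x = partial d (\<lambda>y. 0) x"
      by (simp only: dpar.simps e if_False)
    then show ?thesis using False by (simp add: partial_const)
  qed
qed

lemma cont_funpow:
  fixes h :: "real \<Rightarrow> real"
  assumes "\<forall>k t. (deriv ^^ k) h differentiable (at t)"
  shows "continuous_on S ((deriv ^^ k) h)"
  by (intro continuous_at_imp_continuous_on ballI DERIV_isCont[OF DERIV_funpow[OF assms]])

lemma SC_osc:
  fixes \<Omega> :: "(real^'n::finite) set"
  assumes "\<forall>k t. (deriv ^^ k) h differentiable (at t)"
  shows "SC \<Omega> (\<lambda>y. h (lam * (y \<bullet> axis i 1)))"
proof -
  have cont: "continuous_on S (dpar ds (\<lambda>y. h (lam * (y \<bullet> axis i 1))))" for S ds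
  proof -
    have "continuous_on S (\<lambda>y. lam ^ length ds * (deriv ^^ length ds) h (lam * (y \<bullet> axis i 1)))"
      by (intro continuous_intros continuous_on_compose2[OF cont_funpow[OF assms, of UNIV]]) auto
    then show ?thesis unfolding dpar_osc[OF assms, abs_def] by (cases "set ds \<subseteq> {i}") auto
  qed
  have ld: "ldiff (dpar ds (\<lambda>y. h (lam * (y \<bullet> axis i 1)))) x d" for ds x d
  proof (cases "set ds \<subseteq> {i}")
    case True
    have e: "dpar ds (\<lambda>y. h (lam * (y \<bullet> axis i 1))) =
      (\<lambda>y. lam ^ length ds * (deriv ^^ length ds) h (lam * (y \<bullet> axis i 1)))"
      unfolding dpar_osc[OF assms, abs_def] using True by simp
    show ?thesis unfolding e by (rule ldiffI, rule osc_line[OF assms])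
  next
    case False
    show ?thesis unfolding dpar_osc[OF assms, abs_def] using False by (simp add: partial_const)
  qed
  show ?thesis unfolding SC_def smooth_on_iff using cont ld ext_ok_cont by blast
qed

lemma osc_bound:
  fixes x :: "real^'n::finite"
  assumes "\<forall>k t. (deriv ^^ k) h differentiable (at t)" "lam \<ge> 0"
    and "\<forall>t. \<bar>(deriv ^^ length ds) h t\<bar> \<le> H"
  shows "\<bar>dpar ds (\<lambda>y. h (lam * (y \<bullet> axis i 1))) x\<bar> \<le> lam ^ length ds * H"
proof -
  have H: "H \<ge> 0" using assms(3) by (meson abs_ge_zero order_trans)
  have "\<bar>lam ^ length ds * (deriv ^^ length ds) h (lam * (x \<bullet> axis i 1))\<bar> \<le> lam ^ length ds * H"
    using assms(2,3) by (simp add: abs_mult mult_left_mono)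
  then show ?thesis unfolding dpar_osc[OF assms(1)] using H assms(2) by auto
qed

section \<open>Smooth periodic functions\<close>

lemma sp_diff: "smooth_periodic h \<Longrightarrow> \<forall>k t. (deriv ^^ k) h differentiable (at t)"
  unfolding smooth_periodic_def by blast

lemma sp_periodic:
  assumes "smooth_periodic h"
  shows "(deriv ^^ k) h (t + 2 * pi) = (deriv ^^ k) h t"
proof (induction k arbitrary: t)
  case 0 then show ?case using assms unfolding smooth_periodic_def by simp
next
  case (Suc k)
  have d: "\<forall>k t. (deriv ^^ k) h differentiable (at t)" using sp_diff[OF assms] .
  have "((deriv ^^ k) h has_real_derivative (deriv ^^ Suc k) h (t + 2 * pi)) (at (t + 2 * pi))"
    by (rule DERIV_funpow[OF d])
  then have "((\<lambda>s. (deriv ^^ k) h (s + 2 * pi)) has_real_derivative (deriv ^^ Suc k) h (t + 2 * pi)) (at t)"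
    by (simp add: DERIV_shift)
  moreover have "(\<lambda>s. (deriv ^^ k) h (s + 2 * pi)) = (deriv ^^ k) h" using Suc.IH by auto
  ultimately have "((deriv ^^ k) h has_real_derivative (deriv ^^ Suc k) h (t + 2 * pi)) (at t)" by simp
  moreover have "((deriv ^^ k) h has_real_derivative (deriv ^^ Suc k) h t) (at t)"
    by (rule DERIV_funpow[OF d])
  ultimately show ?case by (rule DERIV_unique)
qed

lemma periodic_nat: "(\<forall>t. g (t + 2 * pi) = g t) \<Longrightarrow> g (s + real n * (2 * pi)) = g s"
proof (induction n)
  case 0 then show ?case by simp
next
  case (Suc n)
  have "g (s + real (Suc n) * (2 * pi)) = g ((s + real n * (2 * pi)) + 2 * pi)"
    by (simp add: algebra_simps)
  also have "\<dots> = g s" using Suc by simp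
  finally show ?case .
qed

lemma periodic_bounded:
  fixes g :: "real \<Rightarrow> real"
  assumes "continuous_on UNIV g" "\<forall>t. g (t + 2 * pi) = g t"
  shows "\<exists>B. \<forall>t. \<bar>g t\<bar> \<le> B"
proof -
  have "compact (g ` {0..2*pi})"
    by (rule compact_continuous_image) (use assms(1) continuous_on_subset in auto)
  then obtain B where B: "\<forall>y\<in>g ` {0..2*pi}. norm y \<le> B"
    using compact_imp_bounded bounded_iff by metis
  have "\<bar>g t\<bar> \<le> B" for t
  proof -
    define n where "n = \<lfloor>t / (2 * pi)\<rfloor>"
    define s where "s = t - of_int n * (2 * pi)"
    have s: "s \<in> {0..2*pi}"
    proof -
      have "of_int n \<le> t / (2 * pi)" "t / (2 * pi) < of_int n + 1"
        unfolding n_def by linarith+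
      then have "of_int n * (2 * pi) \<le> t" "t < (of_int n + 1) * (2 * pi)"
        using pi_gt_zero by (simp_all add: field_simps)
      then show ?thesis unfolding s_def by (auto simp: algebra_simps)
    qed
    have "g t = g s"
    proof (cases "n \<ge> 0")
      case True
      define m where "m = nat n"
      have m: "n = int m" using True unfolding m_def by simp
      have "t = s + real m * (2 * pi)" unfolding s_def m by simp
      then show ?thesis using periodic_nat[OF assms(2)] by simp
    next
      case False
      define m where "m = nat (- n)"
      have m: "n = - int m" using False unfolding m_def by simp
      have "s = t + real m * (2 * pi)" unfolding s_def m by simp
      then show ?thesis using periodic_nat[OF assms(2)] by simp
    qed
    then show ?thesis using B s by auto
  qed
  then show ?thesis by blast
qed

lemma sp_bounded:
  assumes "smooth_periodic h"
  shows "\<exists>H. \<forall>k t. \<bar>(deriv ^^ k) h t\<bar> \<le> H k"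
proof -
  have "\<forall>k. \<exists>B. \<forall>t. \<bar>(deriv ^^ k) h t\<bar> \<le> B"
  proof
    fix k
    show "\<exists>B. \<forall>t. \<bar>(deriv ^^ k) h t\<bar> \<le> B"
      by (rule periodic_bounded[OF cont_funpow[OF sp_diff[OF assms]]])
        (use sp_periodic[OF assms] in auto)
  qed
  then show ?thesis by metis
qed

section \<open>Periodic antiderivative\<close>

lemma antider_exists:
  fixes g :: "real \<Rightarrow> real"
  assumes cg: "continuous_on UNIV g"
  shows "\<forall>x. ((\<lambda>u. integral {0..u} g - integral {u..0} g) has_real_derivative g x) (at x)"
proof
  fix x :: real
  define a where "a = - (\<bar>x\<bar> + 1)"
  define b where "b = \<bar>x\<bar> + 1"
  have ab: "a < x" "x < b" "a < 0" "0 < b" unfolding a_def b_def by auto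
  have int: "g integrable_on {c..d}" for c d
    by (rule integrable_continuous_interval) (use cg continuous_on_subset in blast)
  have eq: "integral {0..u} g - integral {u..0} g = integral {a..u} g - integral {a..0} g"
    if "u \<in> {a<..<b}" for u
  proof (cases "0 \<le> u")
    case True
    have "integral {a..0} g + integral {0..u} g = integral {a..u} g"
      by (rule Henstock_Kurzweil_Integration.integral_combine) (use ab True int in auto)
    moreover have "integral {u..0} g = 0"
    proof (cases "u = 0")
      case True then show ?thesis by simp
    next
      case False then have "{u..0} = {}" using \<open>0 \<le> u\<close> by auto
      then show ?thesis by simp
    qed
    ultimately show ?thesis by simp
  next
    case False
    have "integral {a..u} g + integral {u..0} g = integral {a..0} g"
      by (rule Henstock_Kurzweil_Integration.integral_combine) (use ab False that int in auto)
    moreover have "{0..u} = {}" using False by auto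
    ultimately show ?thesis by simp
  qed
  have "((\<lambda>u. integral {a..u} g) has_real_derivative g x) (at x within {a..b})"
    by (rule integral_has_real_derivative) (use cg continuous_on_subset ab in auto)
  then have "((\<lambda>u. integral {a..u} g) has_real_derivative g x) (at x within {a<..<b})"
    by (rule DERIV_subset) auto
  moreover have "at x within {a<..<b} = at x" by (rule at_within_open) (use ab in auto)
  ultimately have "((\<lambda>u. integral {a..u} g) has_real_derivative g x) (at x)"
    by simp
  then have "((\<lambda>u. integral {a..u} g - integral {a..0} g) has_real_derivative g x) (at x)"
    by (auto intro!: derivative_eq_intros)
  then show "((\<lambda>u. integral {0..u} g - integral {u..0} g) has_real_derivative g x) (at x)"
    by (rule has_field_derivative_transform_within_open[of _ _ _ "{a<..<b}"])
      (use ab eq in auto)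
qed

lemma periodic_antider:
  assumes "smooth_periodic \<gamma>" "zero_mean \<gamma>"
  shows "\<exists>\<Phi>. smooth_periodic \<Phi> \<and> zero_mean \<Phi> \<and> (\<forall>t. (\<Phi> has_real_derivative \<gamma> t) (at t))"
proof -
  have d: "\<forall>k t. (deriv ^^ k) \<gamma> differentiable (at t)" using sp_diff[OF assms(1)] .
  have cg: "continuous_on UNIV \<gamma>" using cont_funpow[OF d, of UNIV 0] by simp
  define F where "F u = integral {0..u} \<gamma> - integral {u..0} \<gamma>" for u
  have dF: "\<forall>x. (F has_real_derivative \<gamma> x) (at x)"
    unfolding F_def[abs_def] by (rule antider_exists[OF cg])
  have cF: "continuous_on UNIV F"
    using dF by (meson DERIV_isCont continuous_at_imp_continuous_on)
  define c where "c = integral {0..2*pi} F / (2 * pi)"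
  define \<Phi> where "\<Phi> u = F u - c" for u
  have dP: "\<forall>t. (\<Phi> has_real_derivative \<gamma> t) (at t)"
    unfolding \<Phi>_def[abs_def] using dF by (auto intro!: derivative_eq_intros)
  have dP': "deriv \<Phi> = \<gamma>" using dP DERIV_imp_deriv by blast
  have F0: "F 0 = 0" unfolding F_def by simp
  have F2: "F (2 * pi) = 0"
  proof -
    have "{2 * pi..0} = {}" using pi_gt_zero by auto
    then show ?thesis using assms(2) unfolding F_def zero_mean_def by simp
  qed
  have per: "\<Phi> (t + 2 * pi) = \<Phi> t" for t
  proof -
    have "\<forall>x. ((\<lambda>t. F (t + 2 * pi) - F t) has_real_derivative 0) (at x)"
    proof
      fix x
      have "((\<lambda>t. F (t + 2 * pi)) has_real_derivative \<gamma> (x + 2 * pi)) (at x)"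
        using dF DERIV_shift by blast
      then have "((\<lambda>t. F (t + 2 * pi) - F t) has_real_derivative \<gamma> (x + 2 * pi) - \<gamma> x) (at x)"
        using dF by (auto intro!: derivative_eq_intros)
      then show "((\<lambda>t. F (t + 2 * pi) - F t) has_real_derivative 0) (at x)"
        using sp_periodic[OF assms(1), of 0 x] by simp
    qed
    then have "F (t + 2 * pi) - F t = F (0 + 2 * pi) - F 0" by (rule DERIV_isconst_all)
    then show ?thesis unfolding \<Phi>_def using F0 F2 by simp
  qed
  have sp: "smooth_periodic \<Phi>"
    unfolding smooth_periodic_def
  proof (intro conjI allI)
    fix x show "\<Phi> (x + 2 * pi) = \<Phi> x" by (rule per)
  next
    fix k x
    show "(deriv ^^ k) \<Phi> differentiable (at x)"
    proof (cases k)
      case 0 then show ?thesis using dP by (auto simp: real_differentiable_def)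
    next
      case (Suc m)
      then have "(deriv ^^ k) \<Phi> = (deriv ^^ m) \<gamma>" unfolding Suc funpow_Suc_right comp_def dP' by simp
      then show ?thesis using d by simp
    qed
  qed
  have zm: "zero_mean \<Phi>"
  proof -
    have iF: "F integrable_on {0..2*pi}"
      by (rule integrable_continuous_interval) (use cF continuous_on_subset in blast)
    have "integral {0..2*pi} \<Phi> = integral {0..2*pi} F - integral {0..2*pi} (\<lambda>u. c)"
      unfolding \<Phi>_def by (rule integral_diff[OF iF]) auto
    also have "\<dots> = 0" unfolding c_def using pi_gt_zero by simp
    finally show ?thesis unfolding zero_mean_def .
  qed
  show ?thesis using sp zm dP by blast
qed



fun LB :: "(nat \<Rightarrow> real) \<Rightarrow> (nat \<Rightarrow> real) \<Rightarrow> nat \<Rightarrow> real" where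
  "LB P Q 0 = P 0 * Q 0"
| "LB P Q (Suc m) = LB (\<lambda>r. P (Suc r)) Q m + LB P (\<lambda>r. Q (Suc r)) m"

lemma LB_scale:
  "LB (\<lambda>r. a * x ^ r * P r) (\<lambda>r. b * x ^ r * Q r) m = a * b * x ^ m * LB P Q m"
proof (induction m arbitrary: a b P Q)
  case 0 then show ?case by simp
next
  case (Suc m)
  have e1: "(\<lambda>r. a * x ^ Suc r * P (Suc r)) = (\<lambda>r. (a * x) * x ^ r * P (Suc r))"
    by (auto simp: algebra_simps)
  have e2: "(\<lambda>r. b * x ^ Suc r * Q (Suc r)) = (\<lambda>r. (b * x) * x ^ r * Q (Suc r))"
    by (auto simp: algebra_simps)
  show ?case
    by (simp only: LB.simps e1 e2 Suc.IH) (simp add: algebra_simps)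
qed

lemma LB_nonneg: "(\<forall>r. 0 \<le> P r) \<Longrightarrow> (\<forall>r. 0 \<le> Q r) \<Longrightarrow> 0 \<le> LB P Q m"
  by (induction m arbitrary: P Q) auto

lemma LB_mono:
  "(\<forall>r. 0 \<le> P r \<and> P r \<le> P' r) \<Longrightarrow> (\<forall>r. 0 \<le> Q r \<and> Q r \<le> Q' r) \<Longrightarrow> LB P Q m \<le> LB P' Q' m"
proof (induction m arbitrary: P Q P' Q')
  case 0
  then have a: "P 0 \<le> P' 0" "0 \<le> Q 0" "Q 0 \<le> Q' 0" "0 \<le> P 0" by auto
  then have "0 \<le> P' 0" by linarith
  then show ?case using mult_mono[OF a(1) a(3) _ a(2)] by simp
next
  case (Suc m)
  have "LB (\<lambda>r. P (Suc r)) Q m \<le> LB (\<lambda>r. P' (Suc r)) Q' m" using Suc by auto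
  moreover have "LB P (\<lambda>r. Q (Suc r)) m \<le> LB P' (\<lambda>r. Q' (Suc r)) m" using Suc by auto
  ultimately show ?case by simp
qed

lemma leibniz:
  fixes g :: "real^'n::finite \<Rightarrow> 'b::real_normed_vector" and \<phi> :: "real^'n \<Rightarrow> real"
  assumes "open \<Omega>"
  shows "\<forall>\<phi> (g :: real^'n \<Rightarrow> 'b) P Q. smooth_on \<Omega> \<phi> \<longrightarrow> smooth_on \<Omega> g \<longrightarrow>
     (\<forall>es. \<forall>x\<in>\<Omega>. \<bar>dpar es \<phi> x\<bar> \<le> P (length es)) \<longrightarrow>
     (\<forall>es. \<forall>x\<in>\<Omega>. norm (dpar es g x) \<le> Q (length es)) \<longrightarrow>
     (\<forall>x\<in>\<Omega>. norm (dpar ds (\<lambda>y. \<phi> y *\<^sub>R g y) x) \<le> LB P Q (length ds))"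
proof (induction ds rule: rev_induct)
  case Nil
  show ?case
  proof (intro allI impI ballI)
    fix \<phi> :: "real^'n \<Rightarrow> real" and g :: "real^'n \<Rightarrow> 'b" and P Q x
    assume h: "\<forall>es. \<forall>x\<in>\<Omega>. \<bar>dpar es \<phi> x\<bar> \<le> P (length es)"
      "\<forall>es. \<forall>x\<in>\<Omega>. norm (dpar es g x) \<le> Q (length es)" and x: "x \<in> \<Omega>"
    have a: "\<bar>\<phi> x\<bar> \<le> P 0" using h(1) x by (metis dpar.simps(1) list.size(3))
    have b: "norm (g x) \<le> Q 0" using h(2) x by (metis dpar.simps(1) list.size(3))
    show "norm (dpar [] (\<lambda>y. \<phi> y *\<^sub>R g y) x) \<le> LB P Q (length [])"
      using mult_mono[OF a b] a by simp
  qed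
next
  case (snoc d es)
  show ?case
  proof (intro allI impI ballI)
    fix \<phi> :: "real^'n \<Rightarrow> real" and g :: "real^'n \<Rightarrow> 'b" and P Q x
    assume s: "smooth_on \<Omega> \<phi>" "smooth_on \<Omega> g"
      and h: "\<forall>es. \<forall>x\<in>\<Omega>. \<bar>dpar es \<phi> x\<bar> \<le> P (length es)"
      "\<forall>es. \<forall>x\<in>\<Omega>. norm (dpar es g x) \<le> Q (length es)" and x: "x \<in> \<Omega>"
    have h1: "\<forall>fs. \<forall>x\<in>\<Omega>. \<bar>dpar fs (partial d \<phi>) x\<bar> \<le> P (Suc (length fs))"
      using h(1) by (metis dpar_snoc length_append_singleton)
    have h2: "\<forall>fs. \<forall>x\<in>\<Omega>. norm (dpar fs (partial d g) x) \<le> Q (Suc (length fs))"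
      using h(2) by (metis dpar_snoc length_append_singleton)
    have A: "norm (dpar es (\<lambda>y. partial d \<phi> y *\<^sub>R g y) x) \<le> LB (\<lambda>r. P (Suc r)) Q (length es)"
      using snoc.IH[rule_format, of "partial d \<phi>" g "\<lambda>r. P (Suc r)" Q, OF smooth_on_partial[OF s(1)] s(2) h1[rule_format] h(2)[rule_format] x] by simp
    have B: "norm (dpar es (\<lambda>y. \<phi> y *\<^sub>R partial d g y) x) \<le> LB P (\<lambda>r. Q (Suc r)) (length es)"
      using snoc.IH[rule_format, of \<phi> "partial d g" P "\<lambda>r. Q (Suc r)", OF s(1) smooth_on_partial[OF s(2)] h(1)[rule_format] h2[rule_format] x] by simp
    have "norm (dpar (es @ [d]) (\<lambda>y. \<phi> y *\<^sub>R g y) x) \<le>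
        norm (dpar es (\<lambda>y. partial d \<phi> y *\<^sub>R g y) x) + norm (dpar es (\<lambda>y. \<phi> y *\<^sub>R partial d g y) x)"
      unfolding dpar_scaleR_snoc[OF assms s x] by (rule norm_triangle_ineq)
    also have "\<dots> \<le> LB P Q (length (es @ [d]))" using A B by simp
    finally show "norm (dpar (es @ [d]) (\<lambda>y. \<phi> y *\<^sub>R g y) x) \<le> LB P Q (length (es @ [d]))" .
  qed
qed

lemma leibniz':
  fixes g :: "real^'n::finite \<Rightarrow> 'b::real_normed_vector" and \<phi> :: "real^'n \<Rightarrow> real"
  assumes "open \<Omega>" "smooth_on \<Omega> \<phi>" "smooth_on \<Omega> g"
    "\<forall>es. \<forall>x\<in>\<Omega>. \<bar>dpar es \<phi> x\<bar> \<le> P (length es)"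
    "\<forall>es. \<forall>x\<in>\<Omega>. norm (dpar es g x) \<le> Q (length es)" "x \<in> \<Omega>"
  shows "norm (dpar ds (\<lambda>y. \<phi> y *\<^sub>R g y) x) \<le> LB P Q (length ds)"
  using leibniz[OF assms(1), of ds] assms(2-6) by blast



definition aa :: "real^'n::finite^'n \<Rightarrow> 'n \<Rightarrow> real" where
  "aa M p = M $ p $ p - (\<Sum>b\<in>UNIV - {p}. M $ p $ b)"

definition vv :: "'n::finite \<Rightarrow> real^'n^'n \<Rightarrow> real^'n" where
  "vv i M = (\<chi> p. if p = i then (aa M i - (\<Sum>b\<in>UNIV - {i}. aa M b)) / 2 else - aa M p)"

definition Rm :: "'n::finite \<Rightarrow> real^'n^'n \<Rightarrow> real^'n^'n" where
  "Rm i M = M - outer (vv i M) (axis i 1) - outer (axis i 1) (vv i M)"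

lemma aa_add: "aa (M + N) p = aa M p + aa N p"
  unfolding aa_def by (simp add: sum.distrib)

lemma aa_scale: "aa (c *\<^sub>R M) p = c * aa M p"
  unfolding aa_def by (simp add: sum_distrib_left algebra_simps)

lemma vv_add: "vv i (M + N) = vv i M + vv i N"
  unfolding vv_def by (simp add: vec_eq_iff aa_add sum.distrib field_simps)

lemma vv_scale: "vv i (c *\<^sub>R M) = c *\<^sub>R vv i M"
  unfolding vv_def by (simp add: vec_eq_iff aa_scale sum_distrib_left field_simps)

lemma linear_vv: "linear (vv i)"
  by (rule linearI) (simp_all add: vv_add vv_scale)

lemma bl_vv: "bounded_linear (vv i)"
  using linear_vv linear_conv_bounded_linear by blast

lemma outer_add1: "outer (u + v) w = outer u w + outer v w"
  unfolding outer_def by (simp add: vec_eq_iff algebra_simps)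
lemma outer_add2: "outer w (u + v) = outer w u + outer w v"
  unfolding outer_def by (simp add: vec_eq_iff algebra_simps)
lemma outer_scale1: "outer (c *\<^sub>R u) w = c *\<^sub>R outer u w"
  unfolding outer_def by (simp add: vec_eq_iff algebra_simps)
lemma outer_scale2: "outer w (c *\<^sub>R u) = c *\<^sub>R outer w u"
  unfolding outer_def by (simp add: vec_eq_iff algebra_simps)

lemma linear_Rm: "linear (Rm i)"
  by (rule linearI)
    (simp_all add: Rm_def vv_add vv_scale outer_add1 outer_add2 outer_scale1 outer_scale2 algebra_simps)

lemma bl_Rm: "bounded_linear (Rm i)"
  using linear_Rm linear_conv_bounded_linear by blast

lemma Rm_entry: "Rm i M $ p $ q = M $ p $ q - vv i M $ p * (if q = i then 1 else 0) - (if p = i then 1 else 0) * vv i M $ q"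
  unfolding Rm_def outer_def by (simp add: axis_def)

lemma Rm_diag:
  "Rm i M $ p $ p = (\<Sum>b\<in>UNIV - {p}. Rm i M $ p $ b)"
proof -
  have fin: "finite (UNIV - {p})" by simp
  show ?thesis
  proof (cases "p = i")
    case True
    have "(\<Sum>b\<in>UNIV - {i}. Rm i M $ i $ b) = (\<Sum>b\<in>UNIV - {i}. M $ i $ b - vv i M $ b)"
      by (rule sum.cong) (auto simp: Rm_entry)
    also have "\<dots> = (\<Sum>b\<in>UNIV - {i}. M $ i $ b) - (\<Sum>b\<in>UNIV - {i}. vv i M $ b)"
      by (simp add: sum_subtractf)
    also have "(\<Sum>b\<in>UNIV - {i}. vv i M $ b) = - (\<Sum>b\<in>UNIV - {i}. aa M b)"
      by (simp add: vv_def sum_negf[symmetric])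
    moreover have "vv i M $ i = (aa M i - (\<Sum>b\<in>UNIV - {i}. aa M b)) / 2" by (simp add: vv_def)
    moreover have "Rm i M $ i $ i = M $ i $ i - 2 * vv i M $ i" by (simp add: Rm_entry)
    ultimately show ?thesis using True by (simp add: aa_def field_simps)
  next
    case False
    have s1: "(\<Sum>b\<in>UNIV - {p}. Rm i M $ p $ b) = (\<Sum>b\<in>UNIV - {p}. M $ p $ b - (if b = i then vv i M $ p else 0))"
      by (rule sum.cong) (use False in \<open>auto simp: Rm_entry\<close>)
    have s2: "(\<Sum>b\<in>UNIV - {p}. M $ p $ b - (if b = i then vv i M $ p else 0)) =
       (\<Sum>b\<in>UNIV - {p}. M $ p $ b) - (\<Sum>b\<in>UNIV - {p}. if b = i then vv i M $ p else 0)"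
      by (rule sum_subtractf)
    have s3: "(\<Sum>b\<in>UNIV - {p}. if b = i then vv i M $ p else 0) = vv i M $ p"
      using False by (simp add: sum.delta)
    have s4: "vv i M $ p = - aa M p" using False by (simp add: vv_def)
    have s5: "Rm i M $ p $ p = M $ p $ p" using False by (simp add: Rm_entry)
    have "(\<Sum>b\<in>UNIV - {p}. Rm i M $ p $ b) = (\<Sum>b\<in>UNIV - {p}. M $ p $ b) - vv i M $ p"
      using s1 s2 s3 by simp
    then show ?thesis using s4 s5 by (simp add: aa_def)
  qed
qed

lemma xi_pair_norm: "a \<noteq> b \<Longrightarrow> norm (axis a (1::real) + axis b 1) = sqrt 2"
proof -
  assume ab: "a \<noteq> b"
  have "(axis a (1::real) + axis b 1) \<bullet> (axis a 1 + axis b 1) = 2"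
    using ab by (simp add: inner_add_left inner_add_right inner_axis_axis)
  then show ?thesis by (simp add: norm_eq_sqrt_inner)
qed

lemma xi_outer_entry:
  assumes "a \<noteq> b"
  shows "outer (xi_pair a b) (xi_pair a b) $ p $ q =
    ((if p = a then 1 else 0) + (if p = b then 1 else 0)) * ((if q = a then 1 else 0) + (if q = b then 1 else 0)) / 2"
proof -
  have "(1 / sqrt 2) * (1 / sqrt 2) = (1 / 2 :: real)"
  proof -
    have "sqrt 2 * sqrt 2 = (2::real)" by simp
    then show ?thesis by (simp add: field_simps)
  qed
  then show ?thesis
    unfolding outer_def xi_pair_def xi_pair_norm[OF assms] by (simp add: axis_def algebra_simps)
qed

lemma sum4: "(\<Sum>a\<in>A. \<Sum>b\<in>B a. f a b * (x1 a b + x2 a b + x3 a b + x4 a b) / 2) =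
  ((\<Sum>a\<in>A. \<Sum>b\<in>B a. f a b * x1 a b) + (\<Sum>a\<in>A. \<Sum>b\<in>B a. f a b * x2 a b)
   + (\<Sum>a\<in>A. \<Sum>b\<in>B a. f a b * x3 a b) + (\<Sum>a\<in>A. \<Sum>b\<in>B a. f a b * x4 a b)) / (2::real)"
  by (simp add: distrib_left sum.distrib sum_divide_distrib add_divide_distrib)

lemma sym_offdiag:
  fixes N :: "real^'n::finite^'n"
  assumes sym: "\<forall>p q. N $ p $ q = N $ q $ p"
    and diag: "\<forall>p. N $ p $ p = (\<Sum>b\<in>UNIV - {p}. N $ p $ b)"
  shows "N \<in> offdiag_span"
proof -
  define S where "S = (\<Sum>a\<in>UNIV. \<Sum>b\<in>UNIV - {a}. N $ a $ b *\<^sub>R outer (xi_pair a b) (xi_pair a b))"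
  have "S \<in> offdiag_span"
    unfolding S_def offdiag_span_def
    by (intro span_sum span_scale span_base) auto
  moreover have "S = N"
  proof (simp add: vec_eq_iff, intro allI)
    fix p q
    have "S $ p $ q = (\<Sum>a\<in>UNIV. \<Sum>b\<in>UNIV - {a}. N $ a $ b *
      (((if p = a then 1 else 0) + (if p = b then 1 else 0)) * ((if q = a then 1 else 0) + (if q = b then 1 else 0)) / 2))"
      unfolding S_def by (simp add: xi_outer_entry)
    also have "\<dots> = (\<Sum>a\<in>UNIV. \<Sum>b\<in>UNIV - {a}. N $ a $ b *
      ((if p = a \<and> q = a then 1 else 0) + (if p = a \<and> q = b then 1 else 0)
       + (if p = b \<and> q = a then 1 else 0) + (if p = b \<and> q = b then 1 else 0)) / 2)"
      by (intro sum.cong refl) (auto simp: algebra_simps)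
    also have "\<dots> = ((if p = q then (\<Sum>b\<in>UNIV - {p}. N $ p $ b) else 0)
        + (if p \<noteq> q then N $ p $ q else 0) + (if p \<noteq> q then N $ q $ p else 0)
        + (if p = q then (\<Sum>a\<in>UNIV - {p}. N $ a $ p) else 0)) / 2"
    proof -
      have t1: "(\<Sum>a\<in>UNIV. \<Sum>b\<in>UNIV - {a}. N $ a $ b * (if p = a \<and> q = a then 1 else 0))
          = (if p = q then (\<Sum>b\<in>UNIV - {p}. N $ p $ b) else 0)"
      proof -
        have "(\<Sum>b\<in>UNIV - {a}. N $ a $ b * (if p = a \<and> q = a then 1 else 0)) =
            (if a = p then (if p = q then (\<Sum>b\<in>UNIV - {p}. N $ p $ b) else 0) else 0)" for a
          by auto
        then show ?thesis by (simp add: sum.delta')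
      qed
      have t2: "(\<Sum>a\<in>UNIV. \<Sum>b\<in>UNIV - {a}. N $ a $ b * (if p = a \<and> q = b then 1 else 0))
          = (if p \<noteq> q then N $ p $ q else 0)"
      proof -
        have "(\<Sum>b\<in>UNIV - {a}. N $ a $ b * (if p = a \<and> q = b then 1 else 0)) =
            (\<Sum>b\<in>UNIV - {a}. if q = b then (if p = a then N $ a $ b else 0) else 0)" for a
          by (rule sum.cong) auto
        also have "\<dots> a = (if a = p then (if p \<noteq> q then N $ p $ q else 0) else 0)" for a
          by (subst sum.delta') auto
        finally show ?thesis by (simp add: sum.delta')
      qed
      have t3: "(\<Sum>a\<in>UNIV. \<Sum>b\<in>UNIV - {a}. N $ a $ b * (if p = b \<and> q = a then 1 else 0))
          = (if p \<noteq> q then N $ q $ p else 0)"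
      proof -
        have "(\<Sum>b\<in>UNIV - {a}. N $ a $ b * (if p = b \<and> q = a then 1 else 0)) =
            (\<Sum>b\<in>UNIV - {a}. if p = b then (if q = a then N $ a $ b else 0) else 0)" for a
          by (rule sum.cong) auto
        also have "\<dots> a = (if a = q then (if p \<noteq> q then N $ q $ p else 0) else 0)" for a
          by (subst sum.delta') auto
        finally show ?thesis by (simp add: sum.delta')
      qed
      have t4: "(\<Sum>a\<in>UNIV. \<Sum>b\<in>UNIV - {a}. N $ a $ b * (if p = b \<and> q = b then 1 else 0))
          = (if p = q then (\<Sum>a\<in>UNIV - {p}. N $ a $ p) else 0)"
      proof -
        have "(\<Sum>b\<in>UNIV - {a}. N $ a $ b * (if p = b \<and> q = b then 1 else 0)) =
            (\<Sum>b\<in>UNIV - {a}. if p = b then (if q = b then N $ a $ b else 0) else 0)" for a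
          by (rule sum.cong) auto
        also have "\<dots> a = (if p = q \<and> a \<noteq> p then N $ a $ p else 0)" for a
          by (subst sum.delta') auto
        finally have e: "(\<Sum>b\<in>UNIV - {a}. N $ a $ b * (if p = b \<and> q = b then 1 else 0)) =
            (if p = q \<and> a \<noteq> p then N $ a $ p else 0)" for a .
        show ?thesis
        proof (cases "p = q")
          case True
          have "(\<Sum>a\<in>UNIV. if p = q \<and> a \<noteq> p then N $ a $ p else 0) = (\<Sum>a\<in>UNIV - {p}. N $ a $ p)"
            using True by (simp add: sum.If_cases Diff_eq Compl_eq)
          then show ?thesis unfolding e using True by simp
        next
          case False then show ?thesis by (simp add: e)
        qed
      qed
      show ?thesis
        by (subst sum4, simp only: t1 t2 t3 t4)
    qed
    also have "\<dots> = N $ p $ q"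
    proof (cases "p = q")
      case True
      have "(\<Sum>a\<in>UNIV - {p}. N $ a $ p) = (\<Sum>b\<in>UNIV - {p}. N $ p $ b)"
        using sym by simp
      then show ?thesis using True diag by simp
    next
      case False then show ?thesis using sym by simp
    qed
    finally show "S $ p $ q = N $ p $ q" .
  qed
  ultimately show ?thesis by simp
qed

lemma Rm_span:
  assumes "is_sym M"
  shows "Rm i M \<in> offdiag_span"
proof (rule sym_offdiag)
  have M: "M $ p $ q = M $ q $ p" for p q
    using assms unfolding is_sym_def transpose_def by (metis vec_lambda_beta)
  show "\<forall>p q. Rm i M $ p $ q = Rm i M $ q $ p"
    using M by (auto simp: Rm_entry)
  show "\<forall>p. Rm i M $ p $ p = (\<Sum>b\<in>UNIV - {p}. Rm i M $ p $ b)"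
    using Rm_diag by blast
qed

lemma transpose_outer: "transpose (outer u v) = outer v u"
  unfolding transpose_def outer_def by (simp add: vec_eq_iff mult.commute)

lemma symm_outer: "2 *\<^sub>R symm (outer u v) = outer u v + outer v u"
  unfolding symm_def by (simp add: transpose_outer)

lemma is_sym_symm: "is_sym (symm A)"
  unfolding is_sym_def symm_def by (simp add: transpose_def vec_eq_iff algebra_simps)

lemma is_sym_Rm: "is_sym M \<Longrightarrow> is_sym (Rm i M)"
  unfolding is_sym_def Rm_def
  by (simp add: transpose_outer transpose_def vec_eq_iff outer_def algebra_simps)



lemma grad_entry:
  fixes w :: "real^'n::finite \<Rightarrow> real^'n"
  assumes "ldiff w x q"
  shows "grad w x $ p $ q = partial q w x $ p"
  unfolding grad_def using partial_lin(1)[OF bounded_linear_vec_nth assms] by simp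

lemma grad_lin:
  fixes w1 w2 :: "real^'n::finite \<Rightarrow> real^'n"
  assumes "\<And>q. ldiff w1 x q" "\<And>q. ldiff w2 x q"
  shows "grad (\<lambda>y. w1 y + c *\<^sub>R w2 y) x = grad w1 x + c *\<^sub>R grad w2 x"
proof -
  have l2: "ldiff (\<lambda>y. c *\<^sub>R w2 y) x q" for q
    by (rule partial_lin(2)[OF bounded_linear_scaleR_right assms(2)])
  have "partial q (\<lambda>y. w1 y + c *\<^sub>R w2 y) x = partial q w1 x + c *\<^sub>R partial q w2 x" for q
    using partial_add(1)[OF assms(1) l2] partial_lin(1)[OF bounded_linear_scaleR_right assms(2)] by simp
  moreover have "ldiff (\<lambda>y. w1 y + c *\<^sub>R w2 y) x q" for q
    by (rule partial_add(2)[OF assms(1) l2])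
  ultimately show ?thesis
    using assms by (simp add: vec_eq_iff grad_entry)
qed

lemma grad_zero: "grad (\<lambda>y. 0::real^'n::finite) x = 0"
  unfolding grad_def by (simp add: vec_eq_iff partial_const)

lemma is_sym_add: "is_sym A \<Longrightarrow> is_sym B \<Longrightarrow> is_sym (A + B)"
  unfolding is_sym_def transpose_def by (simp add: vec_eq_iff)

lemma is_sym_scale: "is_sym A \<Longrightarrow> is_sym (c *\<^sub>R A)"
  unfolding is_sym_def transpose_def by (simp add: vec_eq_iff)

lemma is_sym_zero: "is_sym 0"
  unfolding is_sym_def transpose_def by (simp add: vec_eq_iff)

lemma is_sym_sum: "finite S \<Longrightarrow> (\<forall>q\<in>S. is_sym (X q)) \<Longrightarrow> is_sym (\<Sum>q\<in>S. X q)"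
  by (induction S rule: finite_induct) (auto intro: is_sym_add is_sym_zero)

lemma symm_add: "symm (A + B) = symm A + symm B"
  unfolding symm_def transpose_def by (simp add: vec_eq_iff algebra_simps)

lemma symm_scale: "symm (c *\<^sub>R A) = c *\<^sub>R symm A"
  unfolding symm_def transpose_def by (simp add: vec_eq_iff algebra_simps)

lemma linear_symm: "linear symm"
  by (rule linearI) (simp_all add: symm_add symm_scale)

lemma outer_axis_sum:
  "(\<Sum>q\<in>UNIV. outer (u q) (axis q (1::real))) = (\<chi> p q. u q $ p)"
  unfolding outer_def by (simp add: vec_eq_iff axis_def if_distrib[of "\<lambda>x. _ * x"] sum.delta' cong: if_cong)

definition Nq :: "'n::finite \<Rightarrow> 'n \<Rightarrow> real^'n^'n \<Rightarrow> real^'n^'n" where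
  "Nq i q M = (-2) *\<^sub>R symm (outer (vv i M) (axis q 1))"

lemma linear_Nq: "linear (Nq i q)"
  by (rule linearI) (simp_all add: Nq_def vv_add vv_scale outer_add1 outer_scale1 symm_add symm_scale scaleR_add_right)

lemma bl_Nq: "bounded_linear (Nq i q)"
  using linear_Nq linear_conv_bounded_linear by blast

lemma sum_Nq:
  "(\<Sum>q\<in>UNIV. Nq i q (F q)) = (-2) *\<^sub>R symm (\<chi> p q. vv i (F q) $ p)"
proof -
  have "(\<Sum>q\<in>UNIV. Nq i q (F q)) = (-2) *\<^sub>R (\<Sum>q\<in>UNIV. symm (outer (vv i (F q)) (axis q 1)))"
    unfolding Nq_def by (simp add: scaleR_sum_right)
  also have "(\<Sum>q\<in>UNIV. symm (outer (vv i (F q)) (axis q 1))) = symm (\<Sum>q\<in>UNIV. outer (vv i (F q)) (axis q 1))"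
    by (rule linear_sum[OF linear_symm, symmetric])
  finally show ?thesis by (simp add: outer_axis_sum)
qed

lemma is_sym_Nq: "is_sym (Nq i q M)"
  unfolding Nq_def by (intro is_sym_scale is_sym_symm)

lemma ident_alg:
  fixes Qm Om D :: "real^'n::finite^'n"
  assumes "mu \<noteq> 0" "lam \<noteq> 0"
  shows "g *\<^sub>R Qm = 2 *\<^sub>R symm (g *\<^sub>R Om + (f / lam) *\<^sub>R D) + (f * (mu / lam)) *\<^sub>R ((1 / mu) *\<^sub>R ((-2) *\<^sub>R symm D))
     + g *\<^sub>R (Qm - Om - transpose Om)"
  using assms unfolding symm_def transpose_def by (simp add: vec_eq_iff field_simps)

lemma osc_partial:
  fixes x :: "real^'n::finite"
  assumes "\<forall>k t. (deriv ^^ k) h differentiable (at t)"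
  shows "partial q (\<lambda>y. h (lam * (y \<bullet> axis i 1))) x = (if q = i then lam * deriv h (lam * (x \<bullet> axis i 1)) else 0)"
    "ldiff (\<lambda>y. h (lam * (y \<bullet> axis i 1))) x q"
proof -
  have "((\<lambda>t. h (lam * ((x + t *\<^sub>R axis q 1) \<bullet> axis i 1))) has_vector_derivative
     (if q = i then lam * deriv h (lam * (x \<bullet> axis i 1)) else 0)) (at 0)"
  proof -
    have e: "(deriv ^^ Suc 0) h = deriv h" by simp
    have e0: "(deriv ^^ 0) h = h" by simp
    show ?thesis using osc_line[OF assms, of 1 0 lam x q i] unfolding e e0 mult_1 by (cases "q = i") auto
  qed
  then show "partial q (\<lambda>y. h (lam * (y \<bullet> axis i 1))) x = (if q = i then lam * deriv h (lam * (x \<bullet> axis i 1)) else 0)"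
    "ldiff (\<lambda>y. h (lam * (y \<bullet> axis i 1))) x q"
    by (auto intro: partial_eqI ldiffI)
qed

definition good :: "(real^'n::finite) set \<Rightarrow> (real^'n \<Rightarrow> 'b::real_normed_vector) \<Rightarrow> bool" where
  "good \<Omega> f \<longleftrightarrow> SC \<Omega> f \<and> continuous_on (closure \<Omega>) f"

definition hypQ :: "(real^'n::finite) set \<Rightarrow> real \<Rightarrow> real \<Rightarrow> real \<Rightarrow> (nat \<Rightarrow> real) \<Rightarrow> (real^'n \<Rightarrow> real^'n^'n) \<Rightarrow> bool" where
  "hypQ \<Omega> lam mu K A Q \<longleftrightarrow> open \<Omega> \<and> lam \<ge> mu \<and> mu \<ge> 1 \<and> K \<ge> 0 \<and> good \<Omega> Q \<and>
     (\<forall>x\<in>closure \<Omega>. is_sym (Q x)) \<and>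
     (\<forall>ds. \<forall>x\<in>\<Omega>. norm (dpar ds Q x) \<le> K * A (length ds) * mu ^ length ds)"



lemma cont_osc:
  fixes h :: "real \<Rightarrow> real"
  assumes "\<forall>k t. (deriv ^^ k) h differentiable (at t)"
  shows "continuous_on (S :: (real^'n::finite) set) (\<lambda>y. h (lam * (y \<bullet> axis i 1)))"
proof -
  have "continuous_on UNIV h" using cont_funpow[OF assms, of UNIV 0] by simp
  moreover have "continuous_on S (\<lambda>y::real^'n. lam * (y \<bullet> axis i 1))"
    by (intro continuous_on_mult continuous_on_const continuous_on_inner continuous_on_id)
  ultimately show ?thesis
    by (rule continuous_on_compose2) auto
qed

lemma one_step:
  fixes i :: "'n::finite" and \<gamma> :: "real \<Rightarrow> real" and A :: "nat \<Rightarrow> real"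
  assumes sp: "smooth_periodic \<gamma>" "zero_mean \<gamma>" and A: "\<forall>r. A r \<ge> 0"
  shows "\<exists>\<Phi> Cw CG CR. smooth_periodic \<Phi> \<and> zero_mean \<Phi> \<and> (\<forall>m. Cw m \<ge> 0 \<and> CG m \<ge> 0 \<and> CR m \<ge> 0) \<and>
    (\<forall>(\<Omega>::(real^'n) set) lam mu K Q. hypQ \<Omega> lam mu K A Q \<longrightarrow>
      (\<exists>w G R. good \<Omega> w \<and> good \<Omega> G \<and> (\<forall>x\<in>closure \<Omega>. is_sym (G x)) \<and> good \<Omega> R \<and> (\<forall>x\<in>closure \<Omega>. is_sym (R x)) \<and>
        (\<forall>x\<in>\<Omega>. \<gamma> (lam * (x \<bullet> axis i 1)) *\<^sub>R Q x =
            2 *\<^sub>R symm (grad w x) + (\<Phi> (lam * (x \<bullet> axis i 1)) * (mu / lam)) *\<^sub>R G x + R x) \<and>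
        (\<forall>x\<in>\<Omega>. R x \<in> offdiag_span) \<and>
        (\<forall>ds. \<forall>x\<in>\<Omega>. norm (dpar ds w x) \<le> Cw (length ds) * K * lam ^ length ds / lam \<and>
                    norm (dpar ds G x) \<le> CG (length ds) * K * mu ^ length ds \<and>
                    norm (dpar ds R x) \<le> CR (length ds) * K * lam ^ length ds)))"
proof -
  obtain \<Phi> where \<Phi>: "smooth_periodic \<Phi>" "zero_mean \<Phi>" "\<forall>t. (\<Phi> has_real_derivative \<gamma> t) (at t)"
    using periodic_antider[OF sp] by blast
  have d\<Phi>: "deriv \<Phi> = \<gamma>" using \<Phi>(3) DERIV_imp_deriv by blast
  have df\<Phi>: "\<forall>k t. (deriv ^^ k) \<Phi> differentiable (at t)" using sp_diff[OF \<Phi>(1)] .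
  have df\<gamma>: "\<forall>k t. (deriv ^^ k) \<gamma> differentiable (at t)" using sp_diff[OF sp(1)] .
  obtain H\<Phi> where H\<Phi>: "\<forall>k t. \<bar>(deriv ^^ k) \<Phi> t\<bar> \<le> H\<Phi> k" using sp_bounded[OF \<Phi>(1)] by blast
  obtain H\<gamma> where H\<gamma>: "\<forall>k t. \<bar>(deriv ^^ k) \<gamma> t\<bar> \<le> H\<gamma> k" using sp_bounded[OF sp(1)] by blast
  have H\<Phi>0: "\<forall>k. H\<Phi> k \<ge> 0" using H\<Phi> by (meson abs_ge_zero order_trans)
  have H\<gamma>0: "\<forall>k. H\<gamma> k \<ge> 0" using H\<gamma> by (meson abs_ge_zero order_trans)
  obtain Bv where Bv: "Bv > 0" "\<forall>M. norm (vv i M) \<le> norm M * Bv"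
    using bounded_linear.pos_bounded[OF bl_vv] by blast
  obtain BR where BR: "BR > 0" "\<forall>M. norm (Rm i M) \<le> norm M * BR"
    using bounded_linear.pos_bounded[OF bl_Rm] by blast
  have "\<forall>q. \<exists>B>0. \<forall>M. norm (Nq i q M) \<le> norm M * B"
    using bounded_linear.pos_bounded[OF bl_Nq] by blast
  then obtain BN where BN: "\<forall>q. BN q > 0 \<and> (\<forall>M. norm (Nq i q M) \<le> norm M * BN q)" by metis
  define Cw where "Cw m = Bv * LB H\<Phi> A m" for m
  define CR where "CR m = BR * LB H\<gamma> A m" for m
  define CG where "CG m = (\<Sum>q\<in>UNIV. BN q) * A (Suc m)" for m
  have Cnn: "\<forall>m. Cw m \<ge> 0 \<and> CG m \<ge> 0 \<and> CR m \<ge> 0"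
  proof
    fix m
    have s: "0 \<le> (\<Sum>q\<in>UNIV. BN q)" using BN by (intro sum_nonneg) (auto intro: less_imp_le)
    show "Cw m \<ge> 0 \<and> CG m \<ge> 0 \<and> CR m \<ge> 0"
      unfolding Cw_def CR_def CG_def
      using mult_nonneg_nonneg[OF s A[rule_format, of "Suc m"]]
        mult_nonneg_nonneg[OF less_imp_le[OF Bv(1)] LB_nonneg[OF H\<Phi>0 A, of m]]
        mult_nonneg_nonneg[OF less_imp_le[OF BR(1)] LB_nonneg[OF H\<gamma>0 A, of m]]
      by simp
  qed
  have main: "\<exists>w G R. good \<Omega> w \<and> good \<Omega> G \<and> (\<forall>x\<in>closure \<Omega>. is_sym (G x)) \<and> good \<Omega> R \<and> (\<forall>x\<in>closure \<Omega>. is_sym (R x)) \<and>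
        (\<forall>x\<in>\<Omega>. \<gamma> (lam * (x \<bullet> axis i 1)) *\<^sub>R Q x =
            2 *\<^sub>R symm (grad w x) + (\<Phi> (lam * (x \<bullet> axis i 1)) * (mu / lam)) *\<^sub>R G x + R x) \<and>
        (\<forall>x\<in>\<Omega>. R x \<in> offdiag_span) \<and>
        (\<forall>ds. \<forall>x\<in>\<Omega>. norm (dpar ds w x) \<le> Cw (length ds) * K * lam ^ length ds / lam \<and>
                    norm (dpar ds G x) \<le> CG (length ds) * K * mu ^ length ds \<and>
                    norm (dpar ds R x) \<le> CR (length ds) * K * lam ^ length ds)"
    if hyp: "hypQ \<Omega> lam mu K A Q" for \<Omega> :: "(real^'n) set" and lam mu K Q
  proof -
    have op: "open \<Omega>" and lm: "mu \<le> lam" and mu1: "1 \<le> mu" and K0: "0 \<le> K"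
      and SCQ: "SC \<Omega> Q" and cQ: "continuous_on (closure \<Omega>) Q"
      and symQ: "\<forall>x\<in>closure \<Omega>. is_sym (Q x)"
      and QB: "\<forall>ds. \<forall>x\<in>\<Omega>. norm (dpar ds Q x) \<le> K * A (length ds) * mu ^ length ds"
      using hyp unfolding hypQ_def good_def by auto
    have lam0: "lam > 0" and mu0: "mu > 0" using lm mu1 by auto
    have sQ: "smooth_on \<Omega> Q" using SCQ SC_def by blast
    define \<phi>\<Phi> where "\<phi>\<Phi> y = \<Phi> (lam * (y \<bullet> axis i 1))" for y :: "real^'n"
    define \<phi>\<gamma> where "\<phi>\<gamma> y = \<gamma> (lam * (y \<bullet> axis i 1))" for y :: "real^'n"
    define v where "v y = vv i (Q y)" for y
    define w where "w y = (1/lam) *\<^sub>R (\<phi>\<Phi> y *\<^sub>R v y)" for y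
    have "\<forall>q. ext_ok \<Omega> (partial q Q)" using SCQ unfolding SC_def by (metis dpar.simps)
    then have "\<forall>q. \<exists>g. continuous_on (closure \<Omega>) g \<and> (\<forall>x\<in>\<Omega>. g x = partial q Q x)"
      unfolding ext_ok_def by blast
    then obtain E where E: "\<forall>q. continuous_on (closure \<Omega>) (E q) \<and> (\<forall>x\<in>\<Omega>. E q x = partial q Q x)"
      by metis
    define G where "G y = (1/mu) *\<^sub>R (\<Sum>q\<in>UNIV. Nq i q (E q y))" for y
    define R where "R y = \<phi>\<gamma> y *\<^sub>R Rm i (Q y)" for y
    have SC\<phi>\<Phi>: "SC \<Omega> \<phi>\<Phi>" unfolding \<phi>\<Phi>_def by (rule SC_osc[OF df\<Phi>])
    have SC\<phi>\<gamma>: "SC \<Omega> \<phi>\<gamma>" unfolding \<phi>\<gamma>_def by (rule SC_osc[OF df\<gamma>])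
    have SCv: "SC \<Omega> v" unfolding v_def by (rule SC_lin[OF op bl_vv SCQ])
    have SCpv: "SC \<Omega> (\<lambda>y. \<phi>\<Phi> y *\<^sub>R v y)" by (rule SC_scaleR[OF op SC\<phi>\<Phi> SCv])
    have SCw: "SC \<Omega> w" unfolding w_def by (rule SC_lin[OF op bounded_linear_scaleR_right SCpv])
    have EQ: "\<forall>y\<in>\<Omega>. partial q Q y = E q y" for q using E by auto
    have SCE: "SC \<Omega> (E q)" for q by (rule SC_cong[OF op EQ SC_partial[OF SCQ]])
    have SCN: "SC \<Omega> (\<lambda>y. \<Sum>q\<in>UNIV. Nq i q (E q y))"
      by (rule SC_sum[OF op]) (auto intro: SC_lin[OF op bl_Nq SCE])
    have SCG: "SC \<Omega> G" unfolding G_def by (rule SC_lin[OF op bounded_linear_scaleR_right SCN])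
    have SCRm: "SC \<Omega> (\<lambda>y. Rm i (Q y))" by (rule SC_lin[OF op bl_Rm SCQ])
    have SCR: "SC \<Omega> R" unfolding R_def by (rule SC_scaleR[OF op SC\<phi>\<gamma> SCRm])
    have c\<phi>\<Phi>: "continuous_on S \<phi>\<Phi>" for S unfolding \<phi>\<Phi>_def by (rule cont_osc[OF df\<Phi>])
    have c\<phi>\<gamma>: "continuous_on S \<phi>\<gamma>" for S unfolding \<phi>\<gamma>_def by (rule cont_osc[OF df\<gamma>])
    have cv: "continuous_on (closure \<Omega>) v"
      unfolding v_def by (rule continuous_on_compose2[OF linear_continuous_on[OF bl_vv] cQ]) auto
    have cRm: "continuous_on (closure \<Omega>) (\<lambda>y. Rm i (Q y))"
      by (rule continuous_on_compose2[OF linear_continuous_on[OF bl_Rm] cQ]) auto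
    have cw: "continuous_on (closure \<Omega>) w"
      unfolding w_def by (intro continuous_intros c\<phi>\<Phi> cv)
    have cR: "continuous_on (closure \<Omega>) R"
      unfolding R_def by (intro continuous_intros c\<phi>\<gamma> cRm)
    have cN: "continuous_on (closure \<Omega>) (\<lambda>y. Nq i q (E q y))" for q
      by (rule continuous_on_compose2[OF linear_continuous_on[OF bl_Nq]]) (use E in auto)
    have cG: "continuous_on (closure \<Omega>) G"
      unfolding G_def by (intro continuous_intros cN)
    have gw: "good \<Omega> w" "good \<Omega> G" "good \<Omega> R" unfolding good_def using SCw cw SCG cG SCR cR by auto
    have symG: "\<forall>x\<in>closure \<Omega>. is_sym (G x)"
      unfolding G_def by (auto intro!: is_sym_scale is_sym_sum is_sym_Nq)
    have symR: "\<forall>x\<in>closure \<Omega>. is_sym (R x)"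
      unfolding R_def using symQ by (auto intro!: is_sym_scale is_sym_Rm)
    have span: "\<forall>x\<in>\<Omega>. R x \<in> offdiag_span"
    proof
      fix x assume "x \<in> \<Omega>"
      then have "is_sym (Q x)" using symQ closure_subset by blast
      then have "Rm i (Q x) \<in> offdiag_span" by (rule Rm_span)
      then show "R x \<in> offdiag_span" unfolding R_def offdiag_span_def by (rule span_scale)
    qed
    have ident: "\<forall>x\<in>\<Omega>. \<gamma> (lam * (x \<bullet> axis i 1)) *\<^sub>R Q x =
            2 *\<^sub>R symm (grad w x) + (\<Phi> (lam * (x \<bullet> axis i 1)) * (mu / lam)) *\<^sub>R G x + R x"
    proof
      fix x assume x: "x \<in> \<Omega>"
      let ?g = "\<gamma> (lam * (x \<bullet> axis i 1))"
      let ?D = "\<chi> p q. vv i (partial q Q x) $ p"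
      have lQ: "ldiff Q x q" for q by (rule smooth_on_ldiff0[OF sQ x])
      have lv: "ldiff v x q" for q using SCv x smooth_on_ldiff0 SC_def by blast
      have l\<phi>: "ldiff \<phi>\<Phi> x q" for q unfolding \<phi>\<Phi>_def by (rule osc_partial(2)[OF df\<Phi>])
      have lp: "ldiff (\<lambda>y. \<phi>\<Phi> y *\<^sub>R v y) x q" for q by (rule partial_scaleR(2)[OF l\<phi> lv])
      have lw: "ldiff w x q" for q unfolding w_def by (rule partial_lin(2)[OF bounded_linear_scaleR_right lp])
      have pw: "partial q w x = (1/lam) *\<^sub>R ((if q = i then lam * ?g else 0) *\<^sub>R v x + \<phi>\<Phi> x *\<^sub>R vv i (partial q Q x))" for q
      proof -
        have "partial q w x = (1/lam) *\<^sub>R partial q (\<lambda>y. \<phi>\<Phi> y *\<^sub>R v y) x"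
          unfolding w_def by (rule partial_lin(1)[OF bounded_linear_scaleR_right lp])
        also have "partial q (\<lambda>y. \<phi>\<Phi> y *\<^sub>R v y) x = partial q \<phi>\<Phi> x *\<^sub>R v x + \<phi>\<Phi> x *\<^sub>R partial q v x"
          by (rule partial_scaleR(1)[OF l\<phi> lv])
        also have "partial q \<phi>\<Phi> x = (if q = i then lam * ?g else 0)"
          unfolding \<phi>\<Phi>_def osc_partial(1)[OF df\<Phi>] d\<Phi> by simp
        also have "partial q v x = vv i (partial q Q x)"
          unfolding v_def by (rule partial_lin(1)[OF bl_vv lQ])
        finally show ?thesis .
      qed
      have gw: "grad w x = ?g *\<^sub>R outer (v x) (axis i 1) + (\<phi>\<Phi> x / lam) *\<^sub>R ?D"
        using lam0 by (simp add: vec_eq_iff grad_entry[OF lw] pw outer_def axis_def field_simps)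
      have Gx: "G x = (1/mu) *\<^sub>R ((-2) *\<^sub>R symm ?D)"
        unfolding G_def using E x sum_Nq[of i "\<lambda>q. E q x"] by simp
      have Rx: "R x = ?g *\<^sub>R (Q x - outer (v x) (axis i 1) - transpose (outer (v x) (axis i 1)))"
        unfolding R_def Rm_def \<phi>\<gamma>_def v_def by (simp add: transpose_outer)
      show "?g *\<^sub>R Q x = 2 *\<^sub>R symm (grad w x) + (\<Phi> (lam * (x \<bullet> axis i 1)) * (mu / lam)) *\<^sub>R G x + R x"
        unfolding gw Gx Rx \<phi>\<Phi>_def using ident_alg[of mu lam ?g "Q x" "outer (v x) (axis i 1)" "\<Phi> (lam * (x \<bullet> axis i 1))" ?D] lam0 mu0
        by simp
    qed
    have bounds: "\<forall>ds. \<forall>x\<in>\<Omega>. norm (dpar ds w x) \<le> Cw (length ds) * K * lam ^ length ds / lam \<and>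
                    norm (dpar ds G x) \<le> CG (length ds) * K * mu ^ length ds \<and>
                    norm (dpar ds R x) \<le> CR (length ds) * K * lam ^ length ds"
    proof (intro allI ballI)
      fix ds :: "'n list" and x assume x: "x \<in> \<Omega>"
      let ?m = "length ds"
      have sm: "smooth_on \<Omega> f" if "SC \<Omega> f" for f :: "real^'n \<Rightarrow> 'z::real_normed_vector"
        using that SC_def by blast
      have mulam: "mu ^ k \<le> lam ^ k" for k using lm mu0 by (intro power_mono) auto
      have lamk: "lam ^ k \<ge> 0" for k using lam0 by simp
      have b\<phi>\<Phi>: "\<forall>es. \<forall>y\<in>\<Omega>. \<bar>dpar es \<phi>\<Phi> y\<bar> \<le> 1 * lam ^ length es * H\<Phi> (length es)"
      proof (intro allI ballI)
        fix es :: "'n list" and y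
        have "\<bar>dpar es \<phi>\<Phi> y\<bar> \<le> lam ^ length es * H\<Phi> (length es)"
          unfolding \<phi>\<Phi>_def by (rule osc_bound[OF df\<Phi>]) (use lam0 H\<Phi> in auto)
        then show "\<bar>dpar es \<phi>\<Phi> y\<bar> \<le> 1 * lam ^ length es * H\<Phi> (length es)" by simp
      qed
      have bv: "\<forall>es. \<forall>y\<in>\<Omega>. norm (dpar es v y) \<le> (Bv * K) * lam ^ length es * A (length es)"
      proof (intro allI ballI)
        fix es :: "'n list" and y assume y: "y \<in> \<Omega>"
        have "norm (dpar es v y) = norm (vv i (dpar es Q y))"
          unfolding v_def by (simp add: dpar_lin[OF op bl_vv sQ y])
        also have "\<dots> \<le> norm (dpar es Q y) * Bv" using Bv by blast
        also have "\<dots> \<le> (K * A (length es) * mu ^ length es) * Bv"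
          using QB y Bv by (intro mult_right_mono) auto
        also have "\<dots> \<le> (K * A (length es) * lam ^ length es) * Bv"
          using Bv K0 A mulam by (intro mult_right_mono mult_left_mono mult_nonneg_nonneg) auto
        finally show "norm (dpar es v y) \<le> (Bv * K) * lam ^ length es * A (length es)" by (simp add: algebra_simps)
      qed
      have Lw: "norm (dpar ds (\<lambda>y. \<phi>\<Phi> y *\<^sub>R v y) x) \<le> LB (\<lambda>r. 1 * lam ^ r * H\<Phi> r) (\<lambda>r. (Bv * K) * lam ^ r * A r) ?m"
        by (rule leibniz'[OF op sm[OF SC\<phi>\<Phi>] sm[OF SCv] b\<phi>\<Phi> bv x])
      have "dpar ds w x = (1/lam) *\<^sub>R dpar ds (\<lambda>y. \<phi>\<Phi> y *\<^sub>R v y) x"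
        unfolding w_def by (rule dpar_lin[OF op bounded_linear_scaleR_right sm[OF SCpv] x])
      then have "norm (dpar ds w x) = (1/lam) * norm (dpar ds (\<lambda>y. \<phi>\<Phi> y *\<^sub>R v y) x)"
        using lam0 by simp
      also have "\<dots> \<le> (1/lam) * (1 * (Bv * K) * lam ^ ?m * LB H\<Phi> A ?m)"
        using Lw lam0 unfolding LB_scale by (intro mult_left_mono) auto
      also have "\<dots> = Cw ?m * K * lam ^ ?m / lam" unfolding Cw_def by (simp add: field_simps)
      finally have W: "norm (dpar ds w x) \<le> Cw ?m * K * lam ^ ?m / lam" .
      have b\<phi>\<gamma>: "\<forall>es. \<forall>y\<in>\<Omega>. \<bar>dpar es \<phi>\<gamma> y\<bar> \<le> 1 * lam ^ length es * H\<gamma> (length es)"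
      proof (intro allI ballI)
        fix es :: "'n list" and y
        have "\<bar>dpar es \<phi>\<gamma> y\<bar> \<le> lam ^ length es * H\<gamma> (length es)"
          unfolding \<phi>\<gamma>_def by (rule osc_bound[OF df\<gamma>]) (use lam0 H\<gamma> in auto)
        then show "\<bar>dpar es \<phi>\<gamma> y\<bar> \<le> 1 * lam ^ length es * H\<gamma> (length es)" by simp
      qed
      have bRm: "\<forall>es. \<forall>y\<in>\<Omega>. norm (dpar es (\<lambda>y. Rm i (Q y)) y) \<le> (BR * K) * lam ^ length es * A (length es)"
      proof (intro allI ballI)
        fix es :: "'n list" and y assume y: "y \<in> \<Omega>"
        have "norm (dpar es (\<lambda>y. Rm i (Q y)) y) = norm (Rm i (dpar es Q y))"
          by (simp add: dpar_lin[OF op bl_Rm sQ y])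
        also have "\<dots> \<le> norm (dpar es Q y) * BR" using BR by blast
        also have "\<dots> \<le> (K * A (length es) * mu ^ length es) * BR"
          using QB y BR by (intro mult_right_mono) auto
        also have "\<dots> \<le> (K * A (length es) * lam ^ length es) * BR"
          using BR K0 A mulam by (intro mult_right_mono mult_left_mono mult_nonneg_nonneg) auto
        finally show "norm (dpar es (\<lambda>y. Rm i (Q y)) y) \<le> (BR * K) * lam ^ length es * A (length es)"
          by (simp add: algebra_simps)
      qed
      have LR: "norm (dpar ds R x) \<le> LB (\<lambda>r. 1 * lam ^ r * H\<gamma> r) (\<lambda>r. (BR * K) * lam ^ r * A r) ?m"
        unfolding R_def by (rule leibniz'[OF op sm[OF SC\<phi>\<gamma>] sm[OF SCRm] b\<phi>\<gamma> bRm x])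
      then have RR: "norm (dpar ds R x) \<le> CR ?m * K * lam ^ ?m"
        unfolding LB_scale CR_def by (simp add: algebra_simps)
      have sN: "\<forall>q\<in>UNIV. smooth_on \<Omega> (\<lambda>y. Nq i q (E q y))"
        using SC_lin[OF op bl_Nq SCE] SC_def by blast
      have dq: "dpar ds (\<lambda>y. Nq i q (E q y)) x = Nq i q (dpar (ds @ [q]) Q x)" for q
      proof -
        have "dpar ds (\<lambda>y. Nq i q (E q y)) x = Nq i q (dpar ds (E q) x)"
          by (rule dpar_lin[OF op bl_Nq sm[OF SCE] x])
        also have "dpar ds (E q) x = dpar ds (partial q Q) x"
          by (rule dpar_local[OF op x]) (use E in auto)
        finally show ?thesis by (simp add: dpar_snoc)
      qed
      have "dpar ds G x = (1/mu) *\<^sub>R dpar ds (\<lambda>y. \<Sum>q\<in>UNIV. Nq i q (E q y)) x"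
        unfolding G_def by (rule dpar_lin[OF op bounded_linear_scaleR_right sm[OF SCN] x])
      also have "dpar ds (\<lambda>y. \<Sum>q\<in>UNIV. Nq i q (E q y)) x = (\<Sum>q\<in>UNIV. Nq i q (dpar (ds @ [q]) Q x))"
        using dpar_sum[OF op finite sN x] dq by simp
      finally have "norm (dpar ds G x) = (1/mu) * norm (\<Sum>q\<in>UNIV. Nq i q (dpar (ds @ [q]) Q x))"
        using mu0 by simp
      also have "\<dots> \<le> (1/mu) * (\<Sum>q\<in>UNIV. (K * A (Suc ?m) * mu ^ Suc ?m) * BN q)"
      proof (intro mult_left_mono)
        have "norm (\<Sum>q\<in>UNIV. Nq i q (dpar (ds @ [q]) Q x)) \<le> (\<Sum>q\<in>UNIV. norm (Nq i q (dpar (ds @ [q]) Q x)))"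
          by (rule norm_sum)
        also have "\<dots> \<le> (\<Sum>q\<in>UNIV. (K * A (Suc ?m) * mu ^ Suc ?m) * BN q)"
        proof (rule sum_mono)
          fix q :: 'n
          have "norm (Nq i q (dpar (ds @ [q]) Q x)) \<le> norm (dpar (ds @ [q]) Q x) * BN q" using BN by blast
          also have "\<dots> \<le> (K * A (Suc ?m) * mu ^ Suc ?m) * BN q"
          proof (rule mult_right_mono)
            show "norm (dpar (ds @ [q]) Q x) \<le> K * A (Suc ?m) * mu ^ Suc ?m"
              using QB[rule_format, OF x, of "ds @ [q]"] by simp
          qed (use BN in \<open>auto simp: less_imp_le\<close>)
          finally show "norm (Nq i q (dpar (ds @ [q]) Q x)) \<le> (K * A (Suc ?m) * mu ^ Suc ?m) * BN q" .
        qed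
        finally show "norm (\<Sum>q\<in>UNIV. Nq i q (dpar (ds @ [q]) Q x)) \<le> (\<Sum>q\<in>UNIV. (K * A (Suc ?m) * mu ^ Suc ?m) * BN q)" .
      qed (use mu0 in simp)
      also have "\<dots> = CG ?m * K * mu ^ ?m"
        unfolding CG_def using mu0 by (simp add: sum_distrib_right[symmetric] sum_distrib_left[symmetric] field_simps)
      finally have GG: "norm (dpar ds G x) \<le> CG ?m * K * mu ^ ?m" .
      show "norm (dpar ds w x) \<le> Cw ?m * K * lam ^ ?m / lam \<and>
                    norm (dpar ds G x) \<le> CG ?m * K * mu ^ ?m \<and>
                    norm (dpar ds R x) \<le> CR ?m * K * lam ^ ?m"
        using W GG RR by blast
    qed
    show ?thesis using gw symG symR ident span bounds by blast
  qed
  show ?thesis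
    apply (rule exI[of _ \<Phi>], rule exI[of _ Cw], rule exI[of _ CG], rule exI[of _ CR])
    using \<Phi>(1,2) Cnn main by blast
qed



definition concl :: "'n::finite \<Rightarrow> (real \<Rightarrow> real) \<Rightarrow> nat \<Rightarrow> (nat \<Rightarrow> real) \<Rightarrow> (real^'n) set \<Rightarrow> real \<Rightarrow> real \<Rightarrow> real \<Rightarrow> (real^'n \<Rightarrow> real^'n^'n) \<Rightarrow> bool" where
  "concl i \<gamma> j C \<Omega> lam mu K Q \<longleftrightarrow>
     (\<exists>(w :: real^'n \<Rightarrow> real^'n) G R gj. good \<Omega> w \<and> good \<Omega> G \<and> (\<forall>x\<in>closure \<Omega>. is_sym (G x)) \<and>
        good \<Omega> R \<and> (\<forall>x\<in>closure \<Omega>. is_sym (R x)) \<and> smooth_periodic gj \<and> zero_mean gj \<and>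
        (\<forall>x\<in>\<Omega>. \<gamma> (lam * (x \<bullet> axis i 1)) *\<^sub>R Q x =
            2 *\<^sub>R symm (grad w x) + (gj (lam * (x \<bullet> axis i 1)) * (mu / lam) ^ j) *\<^sub>R G x + R x) \<and>
        (\<forall>x\<in>\<Omega>. R x \<in> offdiag_span) \<and>
        (\<forall>ds. \<forall>x\<in>\<Omega>. norm (dpar ds w x) \<le> C (length ds) * K * lam ^ length ds / lam \<and>
                    norm (dpar ds G x) \<le> C (length ds) * K * mu ^ length ds \<and>
                    norm (dpar ds R x) \<le> C (length ds) * K * lam ^ length ds))"

lemma good_zero: "good (\<Omega>::(real^'n::finite) set) (\<lambda>y. 0)"
  unfolding good_def using SC_const[of \<Omega> 0] by simp

lemma dpar_zero: "dpar ds (\<lambda>y. 0) x = 0"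
  using dpar_const[of ds 0 x] by simp

lemma symm_zero: "symm 0 = 0"
  unfolding symm_def transpose_def by (simp add: vec_eq_iff)

lemma iter:
  fixes i :: "'n::finite"
  shows "\<forall>\<gamma> A. smooth_periodic \<gamma> \<longrightarrow> zero_mean \<gamma> \<longrightarrow> (\<forall>r. A r \<ge> 0) \<longrightarrow>
    (\<exists>C. (\<forall>m. C m \<ge> 0) \<and> (\<forall>(\<Omega> :: (real^'n) set) lam mu K Q. hypQ \<Omega> lam mu K A Q \<longrightarrow> concl i \<gamma> j C \<Omega> lam mu K Q))"
proof (induction j)
  case 0
  show ?case
  proof (intro allI impI)
    fix \<gamma> :: "real \<Rightarrow> real" and A :: "nat \<Rightarrow> real"
    assume sp: "smooth_periodic \<gamma>" "zero_mean \<gamma>" and A: "\<forall>r. A r \<ge> 0"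
    have "concl i \<gamma> 0 A \<Omega> lam mu K Q" if hyp: "hypQ \<Omega> lam mu K A Q" for \<Omega> :: "(real^'n) set" and lam mu K Q
    proof -
      have op: "open \<Omega>" and lm: "mu \<le> lam" and mu1: "1 \<le> mu" and K0: "0 \<le> K"
        and gQ: "good \<Omega> Q" and symQ: "\<forall>x\<in>closure \<Omega>. is_sym (Q x)"
        and QB: "\<forall>ds. \<forall>x\<in>\<Omega>. norm (dpar ds Q x) \<le> K * A (length ds) * mu ^ length ds"
        using hyp unfolding hypQ_def by auto
      have lam0: "lam > 0" using lm mu1 by auto
      show ?thesis
        unfolding concl_def
      proof (rule exI[of _ "\<lambda>y. 0"], rule exI[of _ Q], rule exI[of _ "\<lambda>y. 0"], rule exI[of _ \<gamma>], intro conjI ballI allI)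
        show "good \<Omega> (\<lambda>y. 0::real^'n)" by (rule good_zero)
        show "good \<Omega> (\<lambda>y. 0::real^'n^'n)" by (rule good_zero)
        show "good \<Omega> Q" by (rule gQ)
        show "smooth_periodic \<gamma>" by (rule sp(1))
        show "zero_mean \<gamma>" by (rule sp(2))
        fix x
        show "x \<in> closure \<Omega> \<Longrightarrow> is_sym (Q x)" using symQ by blast
        show "is_sym (0::real^'n^'n)" by (rule is_sym_zero)
        show "x \<in> \<Omega> \<Longrightarrow> \<gamma> (lam * (x \<bullet> axis i 1)) *\<^sub>R Q x =
            2 *\<^sub>R symm (grad (\<lambda>y. 0) x) + (\<gamma> (lam * (x \<bullet> axis i 1)) * (mu / lam) ^ 0) *\<^sub>R Q x + 0"
          by (simp add: grad_zero symm_zero)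
        show "x \<in> \<Omega> \<Longrightarrow> (0::real^'n^'n) \<in> offdiag_span" unfolding offdiag_span_def by (rule span_zero)
        fix ds :: "'n list" assume x: "x \<in> \<Omega>"
        show "norm (dpar ds (\<lambda>y. 0::real^'n) x) \<le> A (length ds) * K * lam ^ length ds / lam"
          using A K0 lam0 by (simp add: dpar_zero)
        show "norm (dpar ds Q x) \<le> A (length ds) * K * mu ^ length ds"
          using QB x by (simp add: algebra_simps)
        show "norm (dpar ds (\<lambda>y. 0::real^'n^'n) x) \<le> A (length ds) * K * lam ^ length ds"
          using A K0 lam0 by (simp add: dpar_zero)
      qed
    qed
    then show "\<exists>C. (\<forall>m. C m \<ge> 0) \<and> (\<forall>(\<Omega> :: (real^'n) set) lam mu K Q. hypQ \<Omega> lam mu K A Q \<longrightarrow> concl i \<gamma> 0 C \<Omega> lam mu K Q)"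
      using A by blast
  qed
next
  case (Suc j)
  show ?case
  proof (intro allI impI)
    fix \<gamma> :: "real \<Rightarrow> real" and A :: "nat \<Rightarrow> real"
    assume sp: "smooth_periodic \<gamma>" "zero_mean \<gamma>" and A: "\<forall>r. A r \<ge> 0"
    obtain \<Phi> Cw CG CR where \<Phi>: "smooth_periodic \<Phi>" "zero_mean \<Phi>"
      and Cnn: "\<forall>m. Cw m \<ge> 0 \<and> CG m \<ge> 0 \<and> CR m \<ge> 0"
      and OS: "\<forall>(\<Omega>::(real^'n) set) lam mu K Q. hypQ \<Omega> lam mu K A Q \<longrightarrow>
      (\<exists>w G R. good \<Omega> w \<and> good \<Omega> G \<and> (\<forall>x\<in>closure \<Omega>. is_sym (G x)) \<and> good \<Omega> R \<and> (\<forall>x\<in>closure \<Omega>. is_sym (R x)) \<and>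
        (\<forall>x\<in>\<Omega>. \<gamma> (lam * (x \<bullet> axis i 1)) *\<^sub>R Q x =
            2 *\<^sub>R symm (grad w x) + (\<Phi> (lam * (x \<bullet> axis i 1)) * (mu / lam)) *\<^sub>R G x + R x) \<and>
        (\<forall>x\<in>\<Omega>. R x \<in> offdiag_span) \<and>
        (\<forall>ds. \<forall>x\<in>\<Omega>. norm (dpar ds w x) \<le> Cw (length ds) * K * lam ^ length ds / lam \<and>
                    norm (dpar ds G x) \<le> CG (length ds) * K * mu ^ length ds \<and>
                    norm (dpar ds R x) \<le> CR (length ds) * K * lam ^ length ds))"
      using one_step[OF sp A, of i] by metis
    obtain C' where C'nn: "\<forall>m. C' m \<ge> 0"
      and C': "\<forall>(\<Omega> :: (real^'n) set) lam mu K Q. hypQ \<Omega> lam mu K CG Q \<longrightarrow> concl i \<Phi> j C' \<Omega> lam mu K Q"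
      using Suc.IH[rule_format, OF \<Phi>, of CG] Cnn by metis
    define C where "C m = Cw m + CR m + C' m" for m
    have Cnn': "\<forall>m. C m \<ge> 0" unfolding C_def using Cnn C'nn by (simp add: add_nonneg_nonneg)
    have "concl i \<gamma> (Suc j) C \<Omega> lam mu K Q" if hyp: "hypQ \<Omega> lam mu K A Q" for \<Omega> :: "(real^'n) set" and lam mu K Q
    proof -
      have op: "open \<Omega>" and lm: "mu \<le> lam" and mu1: "1 \<le> mu" and K0: "0 \<le> K"
        using hyp unfolding hypQ_def by auto
      have lam0: "lam > 0" and mu0: "mu > 0" using lm mu1 by auto
      define c where "c = mu / lam"
      have c0: "0 \<le> c" "c \<le> 1" unfolding c_def using lm mu0 lam0 by auto
      obtain w1 G1 R1 where gw1: "good \<Omega> w1" and gG1: "good \<Omega> G1" and sG1: "\<forall>x\<in>closure \<Omega>. is_sym (G1 x)"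
        and gR1: "good \<Omega> R1" and sR1: "\<forall>x\<in>closure \<Omega>. is_sym (R1 x)"
        and e1: "\<forall>x\<in>\<Omega>. \<gamma> (lam * (x \<bullet> axis i 1)) *\<^sub>R Q x =
            2 *\<^sub>R symm (grad w1 x) + (\<Phi> (lam * (x \<bullet> axis i 1)) * (mu / lam)) *\<^sub>R G1 x + R1 x"
        and spR1: "\<forall>x\<in>\<Omega>. R1 x \<in> offdiag_span"
        and b1: "\<forall>ds. \<forall>x\<in>\<Omega>. norm (dpar ds w1 x) \<le> Cw (length ds) * K * lam ^ length ds / lam \<and>
                    norm (dpar ds G1 x) \<le> CG (length ds) * K * mu ^ length ds \<and>
                    norm (dpar ds R1 x) \<le> CR (length ds) * K * lam ^ length ds"
        using OS hyp by metis
      have hyp2: "hypQ \<Omega> lam mu K CG G1"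
        unfolding hypQ_def using op lm mu1 K0 gG1 sG1 b1 by (auto simp: algebra_simps)
      obtain w2 G2 R2 gj where gw2: "good \<Omega> w2" and gG2: "good \<Omega> G2" and sG2: "\<forall>x\<in>closure \<Omega>. is_sym (G2 x)"
        and gR2: "good \<Omega> R2" and sR2: "\<forall>x\<in>closure \<Omega>. is_sym (R2 x)"
        and gj: "smooth_periodic gj" "zero_mean gj"
        and e2: "\<forall>x\<in>\<Omega>. \<Phi> (lam * (x \<bullet> axis i 1)) *\<^sub>R G1 x =
            2 *\<^sub>R symm (grad w2 x) + (gj (lam * (x \<bullet> axis i 1)) * (mu / lam) ^ j) *\<^sub>R G2 x + R2 x"
        and spR2: "\<forall>x\<in>\<Omega>. R2 x \<in> offdiag_span"
        and b2: "\<forall>ds. \<forall>x\<in>\<Omega>. norm (dpar ds w2 x) \<le> C' (length ds) * K * lam ^ length ds / lam \<and>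
                    norm (dpar ds G2 x) \<le> C' (length ds) * K * mu ^ length ds \<and>
                    norm (dpar ds R2 x) \<le> C' (length ds) * K * lam ^ length ds"
        using C'[rule_format, OF hyp2] unfolding concl_def by metis
      have sm: "smooth_on \<Omega> f" if "good \<Omega> f" for f :: "real^'n \<Rightarrow> 'z::real_normed_vector"
        using that unfolding good_def SC_def by blast
      have goodlin: "good \<Omega> (\<lambda>y. f y + c *\<^sub>R g y)" if "good \<Omega> f" "good \<Omega> g" for f g :: "real^'n \<Rightarrow> 'z::real_normed_vector"
        using that unfolding good_def
        by (auto intro!: SC_add[OF op] SC_lin[OF op bounded_linear_scaleR_right] continuous_intros)
      have dlin: "dpar ds (\<lambda>y. f y + c *\<^sub>R g y) x = dpar ds f x + c *\<^sub>R dpar ds g x"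
        if "good \<Omega> f" "good \<Omega> g" "x \<in> \<Omega>" for f g :: "real^'n \<Rightarrow> 'z::real_normed_vector" and ds x
      proof -
        have s2: "smooth_on \<Omega> (\<lambda>y. c *\<^sub>R g y)"
          by (rule smooth_on_lin[OF op bounded_linear_scaleR_right sm[OF that(2)]])
        show ?thesis using dpar_add[OF op sm[OF that(1)] s2 that(3)]
          dpar_lin[OF op bounded_linear_scaleR_right sm[OF that(2)] that(3)] by simp
      qed
      show ?thesis
        unfolding concl_def
      proof (rule exI[of _ "\<lambda>y. w1 y + c *\<^sub>R w2 y"], rule exI[of _ G2], rule exI[of _ "\<lambda>y. R1 y + c *\<^sub>R R2 y"], rule exI[of _ gj], intro conjI ballI allI)
        show "good \<Omega> (\<lambda>y. w1 y + c *\<^sub>R w2 y)" by (rule goodlin[OF gw1 gw2])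
        show "good \<Omega> (\<lambda>y. R1 y + c *\<^sub>R R2 y)" by (rule goodlin[OF gR1 gR2])
        show "good \<Omega> G2" by (rule gG2)
        show "smooth_periodic gj" by (rule gj(1))
        show "zero_mean gj" by (rule gj(2))
        fix x
        show "x \<in> closure \<Omega> \<Longrightarrow> is_sym (G2 x)" using sG2 by blast
        show "x \<in> closure \<Omega> \<Longrightarrow> is_sym (R1 x + c *\<^sub>R R2 x)" using sR1 sR2 by (blast intro: is_sym_add is_sym_scale)
        show "x \<in> \<Omega> \<Longrightarrow> R1 x + c *\<^sub>R R2 x \<in> offdiag_span"
          using spR1 spR2 unfolding offdiag_span_def by (blast intro: span_add span_scale)
        show "x \<in> \<Omega> \<Longrightarrow> \<gamma> (lam * (x \<bullet> axis i 1)) *\<^sub>R Q x =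
            2 *\<^sub>R symm (grad (\<lambda>y. w1 y + c *\<^sub>R w2 y) x) + (gj (lam * (x \<bullet> axis i 1)) * (mu / lam) ^ Suc j) *\<^sub>R G2 x + (R1 x + c *\<^sub>R R2 x)"
        proof -
          assume x: "x \<in> \<Omega>"
          have gr: "grad (\<lambda>y. w1 y + c *\<^sub>R w2 y) x = grad w1 x + c *\<^sub>R grad w2 x"
            by (rule grad_lin) (use smooth_on_ldiff0 sm gw1 gw2 x in blast)+
          have E1: "\<gamma> (lam * (x \<bullet> axis i 1)) *\<^sub>R Q x =
            2 *\<^sub>R symm (grad w1 x) + c *\<^sub>R (\<Phi> (lam * (x \<bullet> axis i 1)) *\<^sub>R G1 x) + R1 x"
            using e1 x unfolding c_def by (simp add: mult.commute)
          show ?thesis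
            unfolding gr E1 using e2 x unfolding c_def[symmetric]
            by (simp add: symm_add symm_scale scaleR_add_right algebra_simps)
        qed
        fix ds :: "'n list" assume x: "x \<in> \<Omega>"
        let ?m = "length ds"
        have LK: "0 \<le> C' ?m * K * lam ^ ?m / lam" using C'nn K0 lam0 by simp
        have LK2: "0 \<le> C' ?m * K * lam ^ ?m" using C'nn K0 lam0 by simp
        have "norm (dpar ds (\<lambda>y. w1 y + c *\<^sub>R w2 y) x) \<le> norm (dpar ds w1 x) + c * norm (dpar ds w2 x)"
          unfolding dlin[OF gw1 gw2 x] using c0 by (metis norm_scaleR abs_of_nonneg norm_triangle_ineq)
        also have "\<dots> \<le> Cw ?m * K * lam ^ ?m / lam + 1 * (C' ?m * K * lam ^ ?m / lam)"
          using b1 b2 x c0 LK by (intro add_mono mult_mono) auto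
        also have "\<dots> \<le> C ?m * K * lam ^ ?m / lam"
          unfolding C_def using Cnn K0 lam0 by (simp add: field_simps mult_right_mono)
        finally show "norm (dpar ds (\<lambda>y. w1 y + c *\<^sub>R w2 y) x) \<le> C ?m * K * lam ^ ?m / lam" .
        show "norm (dpar ds G2 x) \<le> C ?m * K * mu ^ ?m"
        proof -
          have "norm (dpar ds G2 x) \<le> C' ?m * K * mu ^ ?m" using b2 x by blast
          also have "\<dots> \<le> C ?m * K * mu ^ ?m"
            unfolding C_def using Cnn K0 mu0 by (intro mult_right_mono) auto
          finally show ?thesis .
        qed
        have "norm (dpar ds (\<lambda>y. R1 y + c *\<^sub>R R2 y) x) \<le> norm (dpar ds R1 x) + c * norm (dpar ds R2 x)"
          unfolding dlin[OF gR1 gR2 x] using c0 by (metis norm_scaleR abs_of_nonneg norm_triangle_ineq)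
        also have "\<dots> \<le> CR ?m * K * lam ^ ?m + 1 * (C' ?m * K * lam ^ ?m)"
          using b1 b2 x c0 LK2 by (intro add_mono mult_mono) auto
        also have "\<dots> \<le> C ?m * K * lam ^ ?m"
          unfolding C_def using Cnn K0 lam0 by (simp add: field_simps mult_right_mono)
        finally show "norm (dpar ds (\<lambda>y. R1 y + c *\<^sub>R R2 y) x) \<le> C ?m * K * lam ^ ?m" .
      qed
    qed
    then show "\<exists>C. (\<forall>m. C m \<ge> 0) \<and> (\<forall>(\<Omega> :: (real^'n) set) lam mu K Q. hypQ \<Omega> lam mu K A Q \<longrightarrow> concl i \<gamma> (Suc j) C \<Omega> lam mu K Q)"
      using Cnn' by blast
  qed
qed



section \<open>Symmetry of mixed partials\<close>

lemma hvd_shift: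
  fixes z :: "real^'n::finite" and F :: "real^'n \<Rightarrow> 'b::real_normed_vector"
  assumes "ldiff F (z + s0 *\<^sub>R axis c 1) c"
  shows "((\<lambda>s. F (z + s *\<^sub>R axis c 1)) has_vector_derivative partial c F (z + s0 *\<^sub>R axis c 1)) (at s0)"
proof -
  let ?y = "z + s0 *\<^sub>R axis c 1"
  have g: "((\<lambda>t. F (?y + t *\<^sub>R axis c 1)) has_vector_derivative partial c F ?y) (at ((\<lambda>s. s - s0) s0))"
    using ldiff_partial[OF assms] by simp
  have f: "((\<lambda>s. s - s0) has_vector_derivative 1) (at s0)"
    by (auto intro!: derivative_eq_intros)
  have "((\<lambda>t. F (?y + t *\<^sub>R axis c 1)) \<circ> (\<lambda>s. s - s0) has_vector_derivative 1 *\<^sub>R partial c F ?y) (at s0)"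
    by (rule vector_diff_chain_at[OF f g])
  moreover have "(\<lambda>t. F (?y + t *\<^sub>R axis c 1)) \<circ> (\<lambda>s. s - s0) = (\<lambda>s. F (z + s *\<^sub>R axis c 1))"
    by (auto simp: algebra_simps)
  ultimately show ?thesis by simp
qed

lemma norm_two_axes:
  "norm (s *\<^sub>R axis a (1::real) + t *\<^sub>R axis b 1) \<le> \<bar>s\<bar> + \<bar>t\<bar>"
  using norm_triangle_ineq[of "s *\<^sub>R axis a (1::real)" "t *\<^sub>R axis b 1"] by simp

lemma lin_bound:
  fixes f :: "real \<Rightarrow> 'b::real_normed_vector"
  assumes "h > 0" "\<And>t. t \<in> {0..h} \<Longrightarrow> (f has_vector_derivative f' t) (at t)"
    and "\<And>t. t \<in> {0..h} \<Longrightarrow> norm (f' t - D) \<le> B"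
  shows "norm (f h - f 0 - h *\<^sub>R D) \<le> h * (3 * B)"
proof -
  have B0: "B \<ge> 0" using assms(3)[of 0] assms(1) by (meson atLeastAtMost_iff less_imp_le norm_ge_zero order_trans order_refl)
  have "norm (f h - f 0 - (h - 0) *\<^sub>R f' 0) \<le> norm (h - 0) * (2 * B)"
  proof (rule vector_differentiable_bound_linearization[of "{0..h}" f f'])
    show "\<And>x. x \<in> {0..h} \<Longrightarrow> (f has_vector_derivative f' x) (at x within {0..h})"
      using assms(2) has_vector_derivative_at_within by blast
    show "closed_segment 0 h \<subseteq> {0..h}" using assms(1) by (simp add: closed_segment_eq_real_ivl)
    show "\<And>x. x \<in> {0..h} \<Longrightarrow> norm (f' x - f' 0) \<le> 2 * B"
    proof -
      fix x assume x: "x \<in> {0..h}"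
      have "norm (f' x - f' 0) \<le> norm (f' x - D) + norm (f' 0 - D)"
        using norm_triangle_ineq4[of "f' x - D" "f' 0 - D"] by simp
      also have "\<dots> \<le> 2 * B" using assms(3)[OF x] assms(3)[of 0] assms(1) by simp
      finally show "norm (f' x - f' 0) \<le> 2 * B" .
    qed
    show "0 \<in> {0..h}" using assms(1) by simp
  qed
  then have a: "norm (f h - f 0 - h *\<^sub>R f' 0) \<le> h * (2 * B)" using assms(1) by simp
  have b: "h * norm (f' 0 - D) \<le> h * B"
    using assms(3)[of 0] assms(1) by (simp add: mult_left_mono)
  have eqX: "f h - f 0 - h *\<^sub>R D = (f h - f 0 - h *\<^sub>R f' 0) + h *\<^sub>R (f' 0 - D)"
    by (simp add: algebra_simps)
  have tri0: "norm (f h - f 0 - h *\<^sub>R D) \<le> norm (f h - f 0 - h *\<^sub>R f' 0) + norm (h *\<^sub>R (f' 0 - D))"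
    by (subst eqX) (rule norm_triangle_ineq)
  have "norm (h *\<^sub>R (f' 0 - D)) = h * norm (f' 0 - D)" using assms(1) by simp
  then have tri: "norm (f h - f 0 - h *\<^sub>R D) \<le> norm (f h - f 0 - h *\<^sub>R f' 0) + h * norm (f' 0 - D)"
    using tri0 by linarith
  have "norm (f h - f 0 - h *\<^sub>R D) \<le> h * (2 * B) + h * B" using tri a b by linarith
  then show ?thesis by (simp add: algebra_simps)
qed

lemma clairaut_approx:
  fixes F :: "real^'n::finite \<Rightarrow> 'b::real_normed_vector" and x :: "real^'n"
  assumes op: "open \<Omega>" and ld: "\<forall>y\<in>\<Omega>. ldiff F y a \<and> ldiff F y b \<and> ldiff (partial a F) y b"
    and ball: "ball x r \<subseteq> \<Omega>"
    and eps: "\<forall>y\<in>ball x r. norm (partial b (partial a F) y - partial b (partial a F) x) \<le> \<epsilon>"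
    and h: "0 < h" "2 * h < r"
  shows "norm ((F (x + h *\<^sub>R axis a 1 + h *\<^sub>R axis b 1) - F (x + h *\<^sub>R axis a 1) - F (x + h *\<^sub>R axis b 1) + F x)
     - (h * h) *\<^sub>R partial b (partial a F) x) \<le> 9 * h * h * \<epsilon>"
proof -
  define P where "P s t = x + s *\<^sub>R axis a 1 + t *\<^sub>R axis b 1" for s t
  let ?D = "partial b (partial a F) x"
  have Pin: "P s t \<in> ball x r" if "s \<in> {0..h}" "t \<in> {0..h}" for s t
  proof -
    have "norm (s *\<^sub>R axis a (1::real) + t *\<^sub>R axis b 1) \<le> \<bar>s\<bar> + \<bar>t\<bar>" by (rule norm_two_axes)
    moreover have "dist x (P s t) = norm (P s t - x)" by (simp add: dist_norm norm_minus_commute)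
    moreover have "P s t - x = s *\<^sub>R axis a (1::real) + t *\<^sub>R axis b 1" unfolding P_def by simp
    ultimately show ?thesis using that h by simp
  qed
  have PO: "P s t \<in> \<Omega>" if "s \<in> {0..h}" "t \<in> {0..h}" for s t using Pin[OF that] ball by blast
  have inner: "norm (partial a F (P s h) - partial a F (P s 0) - h *\<^sub>R ?D) \<le> h * (3 * \<epsilon>)" if s: "s \<in> {0..h}" for s
  proof -
    have e1: "P s t = (x + s *\<^sub>R axis a 1) + t *\<^sub>R axis b 1" for t unfolding P_def by simp
    have "norm ((\<lambda>t. partial a F (P s t)) h - (\<lambda>t. partial a F (P s t)) 0 - h *\<^sub>R ?D) \<le> h * (3 * \<epsilon>)"
    proof (rule lin_bound[OF h(1)])
      fix t :: real assume t: "t \<in> {0..h}"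
      show "((\<lambda>t. partial a F (P s t)) has_vector_derivative partial b (partial a F) (P s t)) (at t)"
        unfolding e1 by (rule hvd_shift) (use ld PO[OF s t] e1 in auto)
      show "norm (partial b (partial a F) (P s t) - ?D) \<le> \<epsilon>" using eps Pin[OF s t] by blast
    qed
    then show ?thesis by simp
  qed
  define u where "u s = F (P s h) - F (P s 0)" for s
  have du: "(u has_vector_derivative (partial a F (P s h) - partial a F (P s 0))) (at s)" if s: "s \<in> {0..h}" for s
  proof -
    have e2: "P s t = (x + t *\<^sub>R axis b 1) + s *\<^sub>R axis a 1" for s t unfolding P_def by (simp add: algebra_simps)
    have h0: "h \<in> {0..h}" "0 \<in> {0..h}" using h by auto
    have A: "((\<lambda>s. F (P s h)) has_vector_derivative partial a F (P s h)) (at s)"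
      unfolding e2 by (rule hvd_shift) (use ld PO[OF s h0(1)] e2 in auto)
    have B: "((\<lambda>s. F (P s 0)) has_vector_derivative partial a F (P s 0)) (at s)"
      unfolding e2 by (rule hvd_shift) (use ld PO[OF s h0(2)] e2 in auto)
    show ?thesis unfolding u_def[abs_def] by (rule has_vector_derivative_diff[OF A B])
  qed
  have "norm (u h - u 0 - h *\<^sub>R (h *\<^sub>R ?D)) \<le> h * (3 * (h * (3 * \<epsilon>)))"
    by (rule lin_bound[OF h(1) du]) (use inner in auto)
  moreover have "u h - u 0 = F (x + h *\<^sub>R axis a 1 + h *\<^sub>R axis b 1) - F (x + h *\<^sub>R axis a 1) - F (x + h *\<^sub>R axis b 1) + F x"
    unfolding u_def P_def by (simp add: algebra_simps)
  ultimately show ?thesis by (simp add: algebra_simps)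
qed

lemma clairaut:
  fixes F :: "real^'n::finite \<Rightarrow> 'b::real_normed_vector"
  assumes op: "open \<Omega>" and x: "x \<in> \<Omega>"
    and ld: "\<forall>y\<in>\<Omega>. ldiff F y a \<and> ldiff F y b \<and> ldiff (partial a F) y b \<and> ldiff (partial b F) y a"
    and c1: "continuous_on \<Omega> (partial b (partial a F))" and c2: "continuous_on \<Omega> (partial a (partial b F))"
  shows "partial b (partial a F) x = partial a (partial b F) x"
proof -
  have key: "norm (partial b (partial a F) x - partial a (partial b F) x) \<le> 18 * \<epsilon>" if e: "\<epsilon> > 0" for \<epsilon>
  proof -
    obtain r0 where r0: "r0 > 0" "ball x r0 \<subseteq> \<Omega>" using op x open_contains_ball by blast
    have ca: "continuous (at x) (partial b (partial a F))" using c1 op x continuous_on_eq_continuous_at by blast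
    have cb: "continuous (at x) (partial a (partial b F))" using c2 op x continuous_on_eq_continuous_at by blast
    obtain d1 where d1: "d1 > 0" "\<forall>y. dist y x < d1 \<longrightarrow> dist (partial b (partial a F) y) (partial b (partial a F) x) < \<epsilon>"
      using ca e unfolding continuous_at_eps_delta by blast
    obtain d2 where d2: "d2 > 0" "\<forall>y. dist y x < d2 \<longrightarrow> dist (partial a (partial b F) y) (partial a (partial b F) x) < \<epsilon>"
      using cb e unfolding continuous_at_eps_delta by blast
    define r where "r = min r0 (min d1 d2)"
    have r: "r > 0" "ball x r \<subseteq> \<Omega>" using r0 d1 d2 unfolding r_def by auto
    have E1: "\<forall>y\<in>ball x r. norm (partial b (partial a F) y - partial b (partial a F) x) \<le> \<epsilon>"
    proof
      fix y assume "y \<in> ball x r"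
      then have "dist y x < d1" unfolding r_def by (simp add: dist_commute)
      then show "norm (partial b (partial a F) y - partial b (partial a F) x) \<le> \<epsilon>"
        using d1(2) by (auto simp: dist_norm)
    qed
    have E2: "\<forall>y\<in>ball x r. norm (partial a (partial b F) y - partial a (partial b F) x) \<le> \<epsilon>"
    proof
      fix y assume "y \<in> ball x r"
      then have "dist y x < d2" unfolding r_def by (simp add: dist_commute)
      then show "norm (partial a (partial b F) y - partial a (partial b F) x) \<le> \<epsilon>"
        using d2(2) by (auto simp: dist_norm)
    qed
    define h where "h = r / 3"
    have h: "0 < h" "2 * h < r" using r unfolding h_def by auto
    let ?\<Delta> = "F (x + h *\<^sub>R axis a 1 + h *\<^sub>R axis b 1) - F (x + h *\<^sub>R axis a 1) - F (x + h *\<^sub>R axis b 1) + F x"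
    have A1: "norm (?\<Delta> - (h * h) *\<^sub>R partial b (partial a F) x) \<le> 9 * h * h * \<epsilon>"
      by (rule clairaut_approx[OF op _ r(2) E1 h]) (use ld in blast)
    have "norm ((F (x + h *\<^sub>R axis b 1 + h *\<^sub>R axis a 1) - F (x + h *\<^sub>R axis b 1) - F (x + h *\<^sub>R axis a 1) + F x)
       - (h * h) *\<^sub>R partial a (partial b F) x) \<le> 9 * h * h * \<epsilon>"
      by (rule clairaut_approx[OF op _ r(2) E2 h]) (use ld in blast)
    then have A2: "norm (?\<Delta> - (h * h) *\<^sub>R partial a (partial b F) x) \<le> 9 * h * h * \<epsilon>"
      by (simp add: algebra_simps)
    have "norm ((h * h) *\<^sub>R (partial b (partial a F) x - partial a (partial b F) x)) \<le>
        norm (?\<Delta> - (h * h) *\<^sub>R partial a (partial b F) x) + norm (?\<Delta> - (h * h) *\<^sub>R partial b (partial a F) x)"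
      using norm_triangle_ineq4[of "?\<Delta> - (h * h) *\<^sub>R partial a (partial b F) x" "?\<Delta> - (h * h) *\<^sub>R partial b (partial a F) x"]
      by (simp add: algebra_simps)
    also have "\<dots> \<le> (h * h) * (18 * \<epsilon>)" using A1 A2 by simp
    finally have "(h * h) * norm (partial b (partial a F) x - partial a (partial b F) x) \<le> (h * h) * (18 * \<epsilon>)"
      using h by simp
    then show ?thesis using h by (simp add: mult_le_cancel_left_pos)
  qed
  then have "norm (partial b (partial a F) x - partial a (partial b F) x) = 0"
  proof -
    have "norm (partial b (partial a F) x - partial a (partial b F) x) \<le> 0"
    proof (rule field_le_epsilon)
      fix e :: real assume "0 < e"
      then show "norm (partial b (partial a F) x - partial a (partial b F) x) \<le> 0 + e"
        using key[of "e / 18"] by simp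
    qed
    then show ?thesis by simp
  qed
  then show ?thesis by simp
qed



lemma dpar_swap:
  fixes f :: "real^'n::finite \<Rightarrow> 'b::real_normed_vector"
  assumes op: "open \<Omega>" and sf: "smooth_on \<Omega> f" and x: "x \<in> \<Omega>"
  shows "dpar (b # a # ds) f x = dpar (a # b # ds) f x"
proof -
  let ?F = "dpar ds f"
  have ld: "\<forall>y\<in>\<Omega>. ldiff ?F y a \<and> ldiff ?F y b \<and> ldiff (partial a ?F) y b \<and> ldiff (partial b ?F) y a"
    using smooth_on_D(2)[OF sf, of _ ds] smooth_on_D(2)[OF sf, of _ "a # ds"] smooth_on_D(2)[OF sf, of _ "b # ds"]
    by simp
  have c1: "continuous_on \<Omega> (partial b (partial a ?F))" using smooth_on_D(1)[OF sf, of "b # a # ds"] by simp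
  have c2: "continuous_on \<Omega> (partial a (partial b ?F))" using smooth_on_D(1)[OF sf, of "a # b # ds"] by simp
  show ?thesis using clairaut[OF op x ld c1 c2] by simp
qed

lemma dpar_move_front:
  fixes f :: "real^'n::finite \<Rightarrow> 'b::real_normed_vector"
  assumes op: "open \<Omega>" and sf: "smooth_on \<Omega> f"
  shows "\<forall>x\<in>\<Omega>. dpar (ys @ d # zs) f x = dpar (d # ys @ zs) f x"
proof (induction ys)
  case Nil then show ?case by simp
next
  case (Cons y ys)
  show ?case
  proof
    fix x assume x: "x \<in> \<Omega>"
    have "dpar ((y # ys) @ d # zs) f x = partial y (dpar (ys @ d # zs) f) x" by simp
    also have "\<dots> = partial y (dpar (d # ys @ zs) f) x"
      by (rule partial_local[OF op x]) (use Cons.IH in auto)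
    also have "\<dots> = dpar (y # d # (ys @ zs)) f x" by simp
    also have "\<dots> = dpar (d # y # (ys @ zs)) f x" by (rule dpar_swap[OF op sf x])
    finally show "dpar ((y # ys) @ d # zs) f x = dpar (d # (y # ys) @ zs) f x" by simp
  qed
qed

lemma dpar_perm:
  fixes f :: "real^'n::finite \<Rightarrow> 'b::real_normed_vector"
  assumes op: "open \<Omega>" and sf: "smooth_on \<Omega> f"
  shows "\<forall>ds'. mset ds' = mset ds \<longrightarrow> (\<forall>x\<in>\<Omega>. dpar ds' f x = dpar ds f x)"
proof (induction ds)
  case Nil then show ?case by simp
next
  case (Cons d ds)
  show ?case
  proof (intro allI impI ballI)
    fix ds' x assume m: "mset ds' = mset (d # ds)" and x: "x \<in> \<Omega>"
    have "d \<in> set ds'" using m by (metis list.set_intros(1) set_mset_mset)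
    then obtain ys zs where ds': "ds' = ys @ d # zs" by (meson split_list)
    have m2: "mset (ys @ zs) = mset ds" using m ds' by simp
    have "dpar ds' f x = dpar (d # ys @ zs) f x" using dpar_move_front[OF op sf] x ds' by blast
    also have "\<dots> = partial d (dpar (ys @ zs) f) x" by simp
    also have "\<dots> = partial d (dpar ds f) x"
      by (rule partial_local[OF op x]) (use Cons.IH[rule_format, OF m2] in blast)
    finally show "dpar ds' f x = dpar (d # ds) f x" by simp
  qed
qed

lemma dmulti_dpar:
  fixes f :: "real^'n::finite \<Rightarrow> 'b::real_normed_vector"
  assumes op: "open \<Omega>" and sf: "smooth_on \<Omega> f" and x: "x \<in> \<Omega>"
  shows "dmulti (mset ds) f x = dpar ds f x"
proof -
  have "mset (SOME ds'. mset ds' = mset ds) = mset ds" by (rule someI_ex) auto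
  then show ?thesis unfolding dmulti_def using dpar_perm[OF op sf] x by blast
qed

lemma dmulti_some:
  obtains ds where "dmulti \<beta> f = dpar ds f" "length ds = size \<beta>"
proof -
  have "mset (SOME ds'. mset ds' = \<beta>) = \<beta>" by (rule someI_ex) (rule ex_mset)
  then show ?thesis using that unfolding dmulti_def by (metis size_mset)
qed

lemma finite_size_ms: "finite {\<beta>::'n::finite multiset. size \<beta> = m}"
proof -
  have "{\<beta>::'n multiset. size \<beta> = m} = multisets_of_size UNIV m"
    unfolding multisets_of_size_def by auto
  then show ?thesis using finite_multisets_of_size[of "UNIV::'n set" m] by simp
qed

lemma SC_bdd:
  fixes f :: "real^'n::finite \<Rightarrow> 'b::real_normed_vector"
  assumes "SC \<Omega> f" "bounded \<Omega>"
  shows "bdd_above ((\<lambda>x. norm (dpar ds f x)) ` \<Omega>)"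
proof -
  obtain g where g: "continuous_on (closure \<Omega>) g" "\<forall>x\<in>\<Omega>. g x = dpar ds f x"
    using assms(1) unfolding SC_def ext_ok_def by blast
  have "compact (closure \<Omega>)" using assms(2) by (simp add: compact_closure)
  then have "compact (g ` closure \<Omega>)" using g(1) by (rule compact_continuous_image[rotated])
  then obtain B where B: "\<forall>y\<in>g ` closure \<Omega>. norm y \<le> B" using compact_imp_bounded bounded_iff by metis
  have "norm (dpar ds f x) \<le> B" if "x \<in> \<Omega>" for x
    using B g(2) that closure_subset by fastforce
  then show ?thesis by (rule bdd_aboveI2)
qed

lemma SC_bdd_multi:
  fixes f :: "real^'n::finite \<Rightarrow> 'b::real_normed_vector"
  assumes "SC \<Omega> f" "bounded \<Omega>"
  shows "bdd_above ((\<lambda>x. norm (dmulti \<beta> f x)) ` \<Omega>)"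
proof -
  obtain ds where "dmulti \<beta> f = dpar ds f" by (rule dmulti_some)
  then show ?thesis using SC_bdd[OF assms] by simp
qed

lemma Ck_ge:
  fixes f :: "real^'n::finite \<Rightarrow> 'b::real_normed_vector"
  assumes "SC \<Omega> f" "bounded \<Omega>" "x \<in> \<Omega>"
  shows "norm (dmulti \<beta> f x) \<le> Ck_norm \<Omega> (size \<beta>) f"
proof -
  let ?S = "\<lambda>\<beta>. (SUP x\<in>\<Omega>. norm (dmulti \<beta> f x))"
  have S0: "0 \<le> ?S \<beta>'" for \<beta>'
    using cSUP_upper[OF assms(3) SC_bdd_multi[OF assms(1,2)], of \<beta>'] norm_ge_zero order_trans by blast
  have "norm (dmulti \<beta> f x) \<le> ?S \<beta>" by (rule cSUP_upper[OF assms(3) SC_bdd_multi[OF assms(1,2)]])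
  also have "\<dots> \<le> (\<Sum>\<beta>'\<in>{\<beta>'::'n multiset. size \<beta>' = size \<beta>}. ?S \<beta>')"
    by (rule member_le_sum) (auto simp: S0 finite_size_ms)
  also have "\<dots> \<le> (\<Sum>m\<le>size \<beta>. \<Sum>\<beta>'\<in>{\<beta>'::'n multiset. size \<beta>' = m}. ?S \<beta>')"
    by (rule member_le_sum[of "size \<beta>"]) (auto intro!: sum_nonneg simp: S0)
  finally show ?thesis unfolding Ck_norm_def .
qed

lemma Ck_le:
  fixes f :: "real^'n::finite \<Rightarrow> 'b::real_normed_vector"
  assumes "\<Omega> \<noteq> {}" "\<forall>ds. \<forall>x\<in>\<Omega>. norm (dpar ds f x) \<le> B (length ds)"
  shows "Ck_norm \<Omega> k f \<le> (\<Sum>m\<le>k. real (card {\<beta>::'n multiset. size \<beta> = m}) * B m)"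
  unfolding Ck_norm_def
proof (rule sum_mono)
  fix m assume "m \<in> {..k}"
  have "(\<Sum>\<beta>\<in>{\<beta>::'n multiset. size \<beta> = m}. SUP x\<in>\<Omega>. norm (dmulti \<beta> f x)) \<le> (\<Sum>\<beta>\<in>{\<beta>::'n multiset. size \<beta> = m}. B m)"
  proof (rule sum_mono)
    fix \<beta> :: "'n multiset" assume b: "\<beta> \<in> {\<beta>. size \<beta> = m}"
    obtain ds where ds: "dmulti \<beta> f = dpar ds f" "length ds = size \<beta>" by (rule dmulti_some)
    show "(SUP x\<in>\<Omega>. norm (dmulti \<beta> f x)) \<le> B m"
      by (rule cSUP_least[OF assms(1)]) (use assms(2) ds b in auto)
  qed
  then show "(\<Sum>\<beta>\<in>{\<beta>::'n multiset. size \<beta> = m}. SUP x\<in>\<Omega>. norm (dmulti \<beta> f x)) \<le> real (card {\<beta>::'n multiset. size \<beta> = m}) * B m"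
    by simp
qed



lemma Ck_final:
  fixes f :: "real^'n::finite \<Rightarrow> 'b::real_normed_vector"
  assumes ne: "\<Omega> \<noteq> {}" and b: "\<forall>ds. \<forall>x\<in>\<Omega>. norm (dpar ds f x) \<le> Ci (length ds) * K * s ^ length ds * t"
    and s: "s \<ge> 1" and t: "t \<ge> 0" and K: "K \<ge> 0" and Ci: "\<forall>m. Ci m \<ge> 0"
    and Cge: "(\<Sum>m\<le>k. real (card {\<beta>::'n multiset. size \<beta> = m}) * Ci m) \<le> Ck"
  shows "Ck_norm \<Omega> k f \<le> Ck * K * s ^ k * t"
proof -
  have "Ck_norm \<Omega> k f \<le> (\<Sum>m\<le>k. real (card {\<beta>::'n multiset. size \<beta> = m}) * (Ci m * K * s ^ m * t))"
    by (rule Ck_le[OF ne b])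
  also have "\<dots> \<le> (\<Sum>m\<le>k. real (card {\<beta>::'n multiset. size \<beta> = m}) * (Ci m * K * s ^ k * t))"
  proof (rule sum_mono)
    fix m assume "m \<in> {..k}"
    then have "s ^ m \<le> s ^ k" using s by (intro power_increasing) auto
    then have "Ci m * K * s ^ m * t \<le> Ci m * K * s ^ k * t"
      using Ci K t by (intro mult_right_mono mult_left_mono mult_nonneg_nonneg) auto
    then show "real (card {\<beta>::'n multiset. size \<beta> = m}) * (Ci m * K * s ^ m * t) \<le>
        real (card {\<beta>::'n multiset. size \<beta> = m}) * (Ci m * K * s ^ k * t)"
      by (intro mult_left_mono) auto
  qed
  also have "\<dots> = (\<Sum>m\<le>k. real (card {\<beta>::'n multiset. size \<beta> = m}) * Ci m) * (K * s ^ k * t)"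
    by (subst sum_distrib_right) (simp add: algebra_simps)
  also have "\<dots> \<le> Ck * (K * s ^ k * t)"
    using Cge K s t by (intro mult_right_mono mult_nonneg_nonneg) auto
  finally show ?thesis by (simp add: algebra_simps)
qed

theorem lemma2p5:
  fixes \<gamma> :: "real \<Rightarrow> real" and j :: nat
  assumes dim: "CARD('n::finite) \<ge> 2"
    and gam: "smooth_periodic \<gamma>" "zero_mean \<gamma>"
  shows "\<exists>C :: nat \<Rightarrow> real. \<forall>(\<Omega> :: (real^'n) set) (lam::real) (mu::real) (K::real) (Q :: real^'n \<Rightarrow> real^'n^'n) (i::'n).
     open \<Omega> \<and> connected \<Omega> \<and> bounded \<Omega> \<and> \<Omega> \<noteq> {} \<and>
     lam \<ge> mu \<and> mu \<ge> 1 \<and> K \<ge> 0 \<and>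
     smooth_closure \<Omega> Q \<and> (\<forall>x\<in>closure \<Omega>. is_sym (Q x)) \<and>
     (\<forall>k. Ck_norm \<Omega> k Q \<le> K * mu ^ k)
     \<longrightarrow>
     (\<exists>(w :: real^'n \<Rightarrow> real^'n) (G :: real^'n \<Rightarrow> real^'n^'n) (R :: real^'n \<Rightarrow> real^'n^'n) (gj :: real \<Rightarrow> real).
        smooth_closure \<Omega> w \<and>
        smooth_closure \<Omega> G \<and> (\<forall>x\<in>closure \<Omega>. is_sym (G x)) \<and>
        smooth_closure \<Omega> R \<and> (\<forall>x\<in>closure \<Omega>. is_sym (R x)) \<and>
        smooth_periodic gj \<and> zero_mean gj \<and>
        (\<forall>x\<in>\<Omega>. \<gamma> (lam * (x \<bullet> axis i 1)) *\<^sub>R Q x =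
            2 *\<^sub>R symm (grad w x) + (gj (lam * (x \<bullet> axis i 1)) * (mu / lam) ^ j) *\<^sub>R G x + R x) \<and>
        (\<forall>x\<in>\<Omega>. R x \<in> offdiag_span) \<and>
        (\<forall>k. Ck_norm \<Omega> k w \<le> C k * K * lam powr (real k - 1) \<and>
             Ck_norm \<Omega> k G \<le> C k * K * mu ^ k \<and>
             Ck_norm \<Omega> k R \<le> C k * K * lam ^ k))"
proof -
  have one: "\<forall>r. (\<lambda>_. 1::real) r \<ge> 0" by simp
  have "\<forall>i::'n. \<exists>C. (\<forall>m. C m \<ge> 0) \<and> (\<forall>(\<Omega>::(real^'n) set) lam mu K Q. hypQ \<Omega> lam mu K (\<lambda>_. 1) Q \<longrightarrow> concl i \<gamma> j C \<Omega> lam mu K Q)"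
  proof
    fix i :: 'n
    show "\<exists>C. (\<forall>m. C m \<ge> 0) \<and> (\<forall>(\<Omega>::(real^'n) set) lam mu K Q. hypQ \<Omega> lam mu K (\<lambda>_. 1) Q \<longrightarrow> concl i \<gamma> j C \<Omega> lam mu K Q)"
      using iter[of i j, rule_format, OF gam, of "\<lambda>_. 1"] by simp
  qed
  then obtain Ci where Ci: "\<forall>i::'n. (\<forall>m. Ci i m \<ge> 0) \<and>
      (\<forall>(\<Omega>::(real^'n) set) lam mu K Q. hypQ \<Omega> lam mu K (\<lambda>_. 1) Q \<longrightarrow> concl i \<gamma> j (Ci i) \<Omega> lam mu K Q)"
    by metis
  define C where "C k = (\<Sum>i\<in>UNIV. \<Sum>m\<le>k. real (card {\<beta>::'n multiset. size \<beta> = m}) * Ci i m)" for k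
  have Cge: "(\<Sum>m\<le>k. real (card {\<beta>::'n multiset. size \<beta> = m}) * Ci i m) \<le> C k" for i k
    unfolding C_def by (rule member_le_sum) (auto intro!: sum_nonneg mult_nonneg_nonneg simp: Ci)
  show ?thesis
  proof (rule exI[of _ C], intro allI impI)
    fix \<Omega> :: "(real^'n) set" and lam mu K :: real and Q :: "real^'n \<Rightarrow> real^'n^'n" and i :: 'n
    assume H: "open \<Omega> \<and> connected \<Omega> \<and> bounded \<Omega> \<and> \<Omega> \<noteq> {} \<and> lam \<ge> mu \<and> mu \<ge> 1 \<and> K \<ge> 0 \<and>
     smooth_closure \<Omega> Q \<and> (\<forall>x\<in>closure \<Omega>. is_sym (Q x)) \<and> (\<forall>k. Ck_norm \<Omega> k Q \<le> K * mu ^ k)"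
    then have op: "open \<Omega>" and bd: "bounded \<Omega>" and ne: "\<Omega> \<noteq> {}" and lm: "mu \<le> lam" and mu1: "1 \<le> mu"
      and K0: "0 \<le> K" and scQ: "smooth_closure \<Omega> Q" and symQ: "\<forall>x\<in>closure \<Omega>. is_sym (Q x)"
      and CkQ: "\<forall>k. Ck_norm \<Omega> k Q \<le> K * mu ^ k" by auto
    have lam1: "1 \<le> lam" and lam0: "0 < lam" using lm mu1 by auto
    have SCQ: "SC \<Omega> Q" and cQ: "continuous_on (closure \<Omega>) Q"
      using scQ unfolding smooth_closure_def SC_def ext_ok_def by auto
    have sQ: "smooth_on \<Omega> Q" using SCQ SC_def by blast
    have QB: "\<forall>ds. \<forall>x\<in>\<Omega>. norm (dpar ds Q x) \<le> K * (\<lambda>_. 1) (length ds) * mu ^ length ds"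
    proof (intro allI ballI)
      fix ds :: "'n list" and x assume x: "x \<in> \<Omega>"
      have "norm (dpar ds Q x) = norm (dmulti (mset ds) Q x)" using dmulti_dpar[OF op sQ x] by simp
      also have "\<dots> \<le> Ck_norm \<Omega> (size (mset ds)) Q" by (rule Ck_ge[OF SCQ bd x])
      also have "\<dots> \<le> K * mu ^ length ds" using CkQ by simp
      finally show "norm (dpar ds Q x) \<le> K * (\<lambda>_. 1) (length ds) * mu ^ length ds" by simp
    qed
    have hyp: "hypQ \<Omega> lam mu K (\<lambda>_. 1) Q"
      unfolding hypQ_def good_def using op lm mu1 K0 SCQ cQ symQ QB by auto
    have "concl i \<gamma> j (Ci i) \<Omega> lam mu K Q" using Ci hyp by blast
    then obtain w G R gj where gw: "good \<Omega> w" and gG: "good \<Omega> G" and sG: "\<forall>x\<in>closure \<Omega>. is_sym (G x)"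
        and gR: "good \<Omega> R" and sR: "\<forall>x\<in>closure \<Omega>. is_sym (R x)"
        and gj: "smooth_periodic gj" "zero_mean gj"
        and e: "\<forall>x\<in>\<Omega>. \<gamma> (lam * (x \<bullet> axis i 1)) *\<^sub>R Q x =
            2 *\<^sub>R symm (grad w x) + (gj (lam * (x \<bullet> axis i 1)) * (mu / lam) ^ j) *\<^sub>R G x + R x"
        and sp: "\<forall>x\<in>\<Omega>. R x \<in> offdiag_span"
        and b: "\<forall>ds. \<forall>x\<in>\<Omega>. norm (dpar ds w x) \<le> Ci i (length ds) * K * lam ^ length ds / lam \<and>
                    norm (dpar ds G x) \<le> Ci i (length ds) * K * mu ^ length ds \<and>
                    norm (dpar ds R x) \<le> Ci i (length ds) * K * lam ^ length ds"
      unfolding concl_def by metis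
    have sc: "smooth_closure \<Omega> f" if "good \<Omega> f" for f :: "real^'n \<Rightarrow> 'z::real_normed_vector"
      using that unfolding good_def smooth_closure_def SC_def ext_ok_def by auto
    have Cin: "\<forall>m. Ci i m \<ge> 0" using Ci by blast
    have bw: "\<forall>ds. \<forall>x\<in>\<Omega>. norm (dpar ds w x) \<le> Ci i (length ds) * K * lam ^ length ds * (1 / lam)"
      using b by simp
    have bG: "\<forall>ds. \<forall>x\<in>\<Omega>. norm (dpar ds G x) \<le> Ci i (length ds) * K * mu ^ length ds * 1"
      using b by simp
    have bR: "\<forall>ds. \<forall>x\<in>\<Omega>. norm (dpar ds R x) \<le> Ci i (length ds) * K * lam ^ length ds * 1"
      using b by simp
    show "\<exists>(w :: real^'n \<Rightarrow> real^'n) (G :: real^'n \<Rightarrow> real^'n^'n) (R :: real^'n \<Rightarrow> real^'n^'n) (gj :: real \<Rightarrow> real).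
        smooth_closure \<Omega> w \<and>
        smooth_closure \<Omega> G \<and> (\<forall>x\<in>closure \<Omega>. is_sym (G x)) \<and>
        smooth_closure \<Omega> R \<and> (\<forall>x\<in>closure \<Omega>. is_sym (R x)) \<and>
        smooth_periodic gj \<and> zero_mean gj \<and>
        (\<forall>x\<in>\<Omega>. \<gamma> (lam * (x \<bullet> axis i 1)) *\<^sub>R Q x =
            2 *\<^sub>R symm (grad w x) + (gj (lam * (x \<bullet> axis i 1)) * (mu / lam) ^ j) *\<^sub>R G x + R x) \<and>
        (\<forall>x\<in>\<Omega>. R x \<in> offdiag_span) \<and>
        (\<forall>k. Ck_norm \<Omega> k w \<le> C k * K * lam powr (real k - 1) \<and>
             Ck_norm \<Omega> k G \<le> C k * K * mu ^ k \<and>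
             Ck_norm \<Omega> k R \<le> C k * K * lam ^ k)"
    proof (rule exI[of _ w], rule exI[of _ G], rule exI[of _ R], rule exI[of _ gj], intro conjI allI)
      show "smooth_closure \<Omega> w" by (rule sc[OF gw])
      show "smooth_closure \<Omega> G" by (rule sc[OF gG])
      show "smooth_closure \<Omega> R" by (rule sc[OF gR])
      show "\<forall>x\<in>closure \<Omega>. is_sym (G x)" by (rule sG)
      show "\<forall>x\<in>closure \<Omega>. is_sym (R x)" by (rule sR)
      show "smooth_periodic gj" by (rule gj(1))
      show "zero_mean gj" by (rule gj(2))
      show "\<forall>x\<in>\<Omega>. \<gamma> (lam * (x \<bullet> axis i 1)) *\<^sub>R Q x =
            2 *\<^sub>R symm (grad w x) + (gj (lam * (x \<bullet> axis i 1)) * (mu / lam) ^ j) *\<^sub>R G x + R x" by (rule e)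
      show "\<forall>x\<in>\<Omega>. R x \<in> offdiag_span" by (rule sp)
      fix k
      have a: "Ck_norm \<Omega> k w \<le> C k * K * lam ^ k * (1 / lam)"
        by (rule Ck_final[OF ne bw lam1 _ K0 Cin Cge]) (use lam0 in simp)
      have bb: "lam ^ k * (1 / lam) = lam powr (real k - 1)"
        using lam0 by (simp add: powr_diff powr_realpow)
      have "C k * K * lam ^ k * (1 / lam) = C k * K * lam powr (real k - 1)"
        using bb by (simp only: mult.assoc)
      then show "Ck_norm \<Omega> k w \<le> C k * K * lam powr (real k - 1)" using a by linarith
      have "Ck_norm \<Omega> k G \<le> C k * K * mu ^ k * 1"
        by (rule Ck_final[OF ne bG mu1 _ K0 Cin Cge]) simp
      then show "Ck_norm \<Omega> k G \<le> C k * K * mu ^ k" by simp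
      have "Ck_norm \<Omega> k R \<le> C k * K * lam ^ k * 1"
        by (rule Ck_final[OF ne bR lam1 _ K0 Cin Cge]) simp
      then show "Ck_norm \<Omega> k R \<le> C k * K * lam ^ k" by simp
    qed
  qed
qed


end
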